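(* Let $A$ be a normed vector space, give $A^\vee$ the dual norm, let $X$ be a topological space, let $\kappa\colon X\to\mathrm{Max}\,A$ be a map and let $\kappa^\vee=F\circ\kappa\colon X\to\mathrm{Max}\,A^\vee$. (1) If $(X,A,\kappa)$ and $(X,A^\vee,\kappa^\vee)$ are both quotient vector bundles, then they are both continuous normed quotient vector bundles. (2) If $A$ is locally uniformly convex and $(X,A^\vee,\kappa^\vee)$ is a continuous normed quotient vector bundle, then $(X,A,\kappa)$ is a continuous normed quotient vector bundle. (3) If $A$ is reflexive and Fréchet smooth and $(X,A,\kappa)$ is a continuous normed quotient vector bundle, then $(X,A^\vee,\kappa^\vee)$ is a continuous normed quotient vector bundle.
   Context: Scalars are $\mathbb C$. $\mathrm{Max}\,A$ is the set of closed subspaces of $A$; $A^\vee$ is the space of continuous linear functionals with the dual norm; $F(V)=\{\phi\in A^\vee:\phi|_V=0\}$. The lower Vietoris topology on the set of subspaces of a normed space $B$ is generated by $\{V:V\cap U\ne\emptyset\}$, $U\subset B$ open. A quotient vector bundle is a triple $(X,B,\kappa)$ with $\kappa$ continuous from $X$ into the subspaces of $B$ with the lower Vietoris topology; its associated linear bundle $E$ is the quotient of $B\times X$ by $(a,x)\sim(b,x)\iff a-b\in\kappa(x)$, with quotient map $q$. When $B$ is normed, $(X,B,\kappa)$ is a continuous normed quotient vector bundle if it is a quotient vector bundle and the function $E\to\mathbb R$, $q(a,x)\mapsto\mathrm{dist}(a,\kappa(x))$, is continuous. $A$ is locally uniformly convex if for all $a\in A$ and sequences $(a_n)$, $\lim(2\|a\|^2+2\|a_n\|^2-\|a+a_n\|^2)=0$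 implies $\lim\|a-a_n\|=0$. $A$ is Fréchet smooth if for every $a$ with $\|a\|=1$ the limit $\lim_{\delta\to0}(\|a-\delta b\|-\|a\|)/\delta$ exists uniformly in $b$ with $\|b\|=1$. *)

theory Defs
  imports "HOL-Analysis.Analysis"
begin

text \<open>HOL provides only real normed vector spaces; a complex normed space is a real
normed space with a compatible complex scalar multiplication.\<close>

class cnormed_vector = real_normed_vector +
  fixes scaleC :: "complex \<Rightarrow> 'a \<Rightarrow> 'a"
  assumes scaleC_scaleR: "scaleC (complex_of_real r) x = scaleR r x"
    and scaleC_add_right: "scaleC a (x + y) = scaleC a x + scaleC a y"
    and scaleC_add_left: "scaleC (a + b) x = scaleC a x + scaleC b x"
    and scaleC_scaleC: "scaleC a (scaleC b x) = scaleC (a * b) x"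
    and norm_scaleC: "norm (scaleC a x) = cmod a * norm x"

text \<open>The dual A^v: continuous complex-linear functionals, realised inside the type of
bounded (real-)linear maps into complex, whose norm is the operator (= dual) norm.\<close>

definition cdual :: "('a::cnormed_vector \<Rightarrow>\<^sub>L complex) set" where
  "cdual = {f. \<forall>c x. blinfun_apply f (scaleC c x) = c * blinfun_apply f x}"

definition cscale :: "complex \<Rightarrow> ('a::real_normed_vector \<Rightarrow>\<^sub>L complex) \<Rightarrow> ('a \<Rightarrow>\<^sub>L complex)" where
  "cscale c f = Blinfun (\<lambda>x. c * blinfun_apply f x)"

text \<open>F(V) = annihilator of V in A^v.\<close>
definition annih :: "'a::cnormed_vector set \<Rightarrow> ('a \<Rightarrow>\<^sub>L complex) set" where
  "annih V = {\<phi> \<in> cdual. \<forall>v\<in>V. blinfun_apply \<phi> v = 0}"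

text \<open>A normed space B is given as a carrier set inside a real normed type together
with its complex scalar multiplication sc.\<close>

definition csubspace_in :: "(complex \<Rightarrow> 'b \<Rightarrow> 'b) \<Rightarrow> 'b::real_normed_vector set \<Rightarrow> 'b set \<Rightarrow> bool" where
  "csubspace_in sc B V \<longleftrightarrow> V \<subseteq> B \<and> 0 \<in> V \<and> (\<forall>x\<in>V. \<forall>y\<in>V. x + y \<in> V)
      \<and> (\<forall>c. \<forall>x\<in>V. sc c x \<in> V)"

definition lower_vietoris :: "(complex \<Rightarrow> 'b \<Rightarrow> 'b) \<Rightarrow> 'b::real_normed_vector set \<Rightarrow> 'b set topology" where
  "lower_vietoris sc B = topology_generated_by
     {{V. csubspace_in sc B V \<and> V \<inter> U \<noteq> {}} | U. openin (top_of_set B) U}"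

definition quotient_vector_bundle ::
  "'x topology \<Rightarrow> (complex \<Rightarrow> 'b \<Rightarrow> 'b) \<Rightarrow> 'b::real_normed_vector set \<Rightarrow> ('x \<Rightarrow> 'b set) \<Rightarrow> bool" where
  "quotient_vector_bundle X sc B \<kappa> \<longleftrightarrow>
     (\<forall>x\<in>topspace X. csubspace_in sc B (\<kappa> x)) \<and> continuous_map X (lower_vietoris sc B) \<kappa>"

text \<open>E carries the quotient topology of B \<times> X, so continuity of a function on E is
continuity of its composite with the quotient map q on B \<times> X.\<close>
definition cont_normed_qvb ::
  "'x topology \<Rightarrow> (complex \<Rightarrow> 'b \<Rightarrow> 'b) \<Rightarrow> 'b::real_normed_vector set \<Rightarrow> ('x \<Rightarrow> 'b set) \<Rightarrow> bool" where
  "cont_normed_qvb X sc B \<kappa> \<longleftrightarrow> quotient_vector_bundle X sc B \<kappa> \<and>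
     continuous_map (prod_topology (top_of_set B) X) euclideanreal (\<lambda>(a, x). infdist a (\<kappa> x))"

definition locally_uniformly_convex :: "'a::real_normed_vector itself \<Rightarrow> bool" where
  "locally_uniformly_convex _ \<longleftrightarrow> (\<forall>(a::'a) (s::nat \<Rightarrow> 'a).
     (\<lambda>n. 2 * (norm a)\<^sup>2 + 2 * (norm (s n))\<^sup>2 - (norm (a + s n))\<^sup>2) \<longlonglongrightarrow> 0
     \<longrightarrow> (\<lambda>n. norm (a - s n)) \<longlonglongrightarrow> 0)"

definition frechet_smooth :: "'a::real_normed_vector itself \<Rightarrow> bool" where
  "frechet_smooth _ \<longleftrightarrow> (\<forall>a::'a. norm a = 1 \<longrightarrow> (\<exists>L :: 'a \<Rightarrow> real. \<forall>\<epsilon>>0. \<exists>\<eta>>0.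
     \<forall>\<delta>::real. \<forall>b::'a. \<delta> \<noteq> 0 \<and> \<bar>\<delta>\<bar> < \<eta> \<and> norm b = 1 \<longrightarrow>
       \<bar>(norm (a - \<delta> *\<^sub>R b) - norm a) / \<delta> - L b\<bar> < \<epsilon>))"

definition reflexive_space :: "'a::cnormed_vector itself \<Rightarrow> bool" where
  "reflexive_space _ \<longleftrightarrow> (\<forall>\<Phi> :: ('a \<Rightarrow>\<^sub>L complex) \<Rightarrow> complex.
     (\<forall>f\<in>cdual. \<forall>g\<in>cdual. \<Phi> (f + g) = \<Phi> f + \<Phi> g) \<and>
     (\<forall>c. \<forall>f\<in>cdual. \<Phi> (cscale c f) = c * \<Phi> f) \<and>
     (\<exists>K. \<forall>f\<in>cdual. norm (\<Phi> f) \<le> K * norm f)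
     \<longrightarrow> (\<exists>a::'a. \<forall>f\<in>cdual. \<Phi> f = blinfun_apply f a))"

end

theory Submission
  imports Defs
begin

definition hbgood :: "'b::real_normed_vector set \<Rightarrow> 'b set \<Rightarrow> ('b \<Rightarrow> real) \<Rightarrow> real \<Rightarrow> ('b \<times> real) set \<Rightarrow> bool" where
  "hbgood S M u C G \<longleftrightarrow> (\<forall>p\<in>G. \<forall>q\<in>G. p + q \<in> G) \<and> (\<forall>r. \<forall>p\<in>G. r *\<^sub>R p \<in> G)
     \<and> G \<subseteq> S \<times> UNIV \<and> (\<forall>m\<in>M. (m, u m) \<in> G) \<and> (\<forall>x a. (x,a)\<in>G \<longrightarrow> a \<le> C * norm x)"

lemma hbgood_D:
  assumes "hbgood S M u C G"
  shows "\<And>p q. p\<in>G \<Longrightarrow> q\<in>G \<Longrightarrow> p + q \<in> G" "\<And>r p. p \<in> G \<Longrightarrow> r *\<^sub>R p \<in> G"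
    "\<And>p. p \<in> G \<Longrightarrow> fst p \<in> S" "\<And>m. m\<in>M \<Longrightarrow> (m, u m) \<in> G"
    "\<And>x a. (x,a)\<in>G \<Longrightarrow> a \<le> C * norm x"
  using assms unfolding hbgood_def by auto

lemma hbgood_func:
  assumes "hbgood S M u C G" "(x,a) \<in> G" "(x,b) \<in> G"
  shows "a = b"
proof -
  have "(x,a) + (-1) *\<^sub>R (x,b) \<in> G" "(x,b) + (-1) *\<^sub>R (x,a) \<in> G"
    using assms unfolding hbgood_def by blast+
  then have "(0, a - b) \<in> G" "(0, b - a) \<in> G" by auto
  then have "a - b \<le> 0" "b - a \<le> 0" using assms(1) unfolding hbgood_def by fastforce+
  then show ?thesis by simp
qed

lemma hb_extend:
  assumes good: "hbgood S M u C G" and S: "subspace S" and x0: "x0 \<in> S" "x0 \<notin> fst ` G"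
    and ne: "G \<noteq> {}" and C: "C \<ge> 0"
  shows "\<exists>G'. hbgood S M u C G' \<and> G \<subseteq> G' \<and> G' \<noteq> G"
proof -
  have add: "\<And>p q. p\<in>G \<Longrightarrow> q\<in>G \<Longrightarrow> p + q \<in> G" and scl: "\<And>r p. p \<in> G \<Longrightarrow> r *\<^sub>R p \<in> G"
    and sub: "G \<subseteq> S \<times> UNIV" and ext: "\<And>m. m\<in>M \<Longrightarrow> (m, u m) \<in> G"
    and bnd: "\<And>x a. (x,a)\<in>G \<Longrightarrow> a \<le> C * norm x"
    using good unfolding hbgood_def by blast+
  obtain p0 where "p0 \<in> G" using ne by auto
  then have G0: "(0,0) \<in> G" using scl[of p0 0] by (simp add: zero_prod_def)
  define L where "L = {a - C * norm (m - x0) | m a. (m,a)\<in>G}"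
  define c where "c = Sup L"
  have key: "a - C * norm (m - x0) \<le> C * norm (n + x0) - b" if "(m,a)\<in>G" "(n,b)\<in>G" for m a n b
  proof -
    have "(m + n, a + b) \<in> G" using add[OF that] by simp
    then have "a + b \<le> C * norm (m + n)" by (rule bnd)
    moreover have "C * norm (m + n) \<le> C * norm (m - x0) + C * norm (n + x0)"
    proof -
      have "norm (m + n) \<le> norm (m - x0) + norm (n + x0)"
        using norm_triangle_ineq[of "m - x0" "n + x0"] by simp
      with C show ?thesis by (metis distrib_left mult_left_mono)
    qed
    ultimately show ?thesis by linarith
  qed
  have Lne: "L \<noteq> {}" using G0 unfolding L_def by blast
  have Lbdd: "bdd_above L" unfolding L_def bdd_above_def using key[OF _ G0] by auto
  have c_ge: "a - C * norm (m - x0) \<le> c" if "(m,a)\<in>G" for m a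
    unfolding c_def by (rule cSup_upper[OF _ Lbdd]) (use that L_def in auto)
  have c_le: "c \<le> C * norm (n + x0) - b" if "(n,b)\<in>G" for n b
    unfolding c_def by (rule cSup_least[OF Lne]) (use key[OF _ that] L_def in auto)
  define G' where "G' = {(m + t *\<^sub>R x0, a + t * c) | m a t. (m,a) \<in> G}"
  have "hbgood S M u C G'"
    unfolding hbgood_def
  proof (intro conjI ballI allI impI subsetI)
    fix p q assume "p \<in> G'" "q \<in> G'"
    then obtain m a t n b s where p: "p = (m + t *\<^sub>R x0, a + t * c)" "(m,a)\<in>G"
      and q: "q = (n + s *\<^sub>R x0, b + s * c)" "(n,b)\<in>G" unfolding G'_def by blast
    have "(m + n, a + b) \<in> G" using add[OF p(2) q(2)] by simp
    moreover have "p + q = ((m + n) + (t + s) *\<^sub>R x0, (a + b) + (t + s) * c)"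
      using p q by (simp add: algebra_simps scaleR_add_left)
    ultimately show "p + q \<in> G'" unfolding G'_def by blast
  next
    fix r p assume "p \<in> G'"
    then obtain m a t where p: "p = (m + t *\<^sub>R x0, a + t * c)" "(m,a)\<in>G" unfolding G'_def by blast
    have "(r *\<^sub>R m, r * a) \<in> G" using scl[OF p(2), of r] by simp
    moreover have "r *\<^sub>R p = (r *\<^sub>R m + (r * t) *\<^sub>R x0, r * a + (r * t) * c)"
      using p by (simp add: algebra_simps)
    ultimately show "r *\<^sub>R p \<in> G'" unfolding G'_def by blast
  next
    fix p assume "p \<in> G'"
    then obtain m a t where p: "p = (m + t *\<^sub>R x0, a + t * c)" "(m,a)\<in>G" unfolding G'_def by blast
    have "m \<in> S" using sub p(2) by auto
    then show "p \<in> S \<times> UNIV" using p x0 S by (simp add: subspace_add subspace_scale)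
  next
    fix m assume "m \<in> M"
    then have "(m, u m) \<in> G" by (rule ext)
    moreover have "(m, u m) = (m + 0 *\<^sub>R x0, u m + 0 * c)" by simp
    ultimately show "(m, u m) \<in> G'" unfolding G'_def by blast
  next
    fix x a assume "(x,a) \<in> G'"
    then obtain m b t where xa: "x = m + t *\<^sub>R x0" "a = b + t * c" and mb: "(m,b)\<in>G"
      unfolding G'_def by blast
    show "a \<le> C * norm x"
    proof (cases "t = 0")
      case True then show ?thesis using xa bnd[OF mb] by simp
    next
      case False
      show ?thesis
      proof (cases "t > 0")
        case True
        have "((1/t) *\<^sub>R m, (1/t) * b) \<in> G" using scl[OF mb, of "1/t"] by simp
        from c_le[OF this] have "(1/t) * b + c \<le> C * norm ((1/t) *\<^sub>R m + x0)" by simp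
        also have "(1/t) *\<^sub>R m + x0 = (1/t) *\<^sub>R (m + t *\<^sub>R x0)" using True by (simp add: algebra_simps)
        finally have "(1/t) * b + c \<le> (C * norm (m + t *\<^sub>R x0)) / t" using True by simp
        then have "t * ((1/t) * b + c) \<le> C * norm (m + t *\<^sub>R x0)" using True
          by (simp add: field_simps)
        then show ?thesis using xa True by (simp add: algebra_simps)
      next
        case False
        with \<open>t \<noteq> 0\<close> have tn: "-t > 0" by simp
        have "((1/(-t)) *\<^sub>R m, (1/(-t)) * b) \<in> G" using scl[OF mb, of "1/(-t)"] by simp
        from c_ge[OF this] have "(1/(-t)) * b - c \<le> C * norm ((1/(-t)) *\<^sub>R m - x0)" by simp
        also have "(1/(-t)) *\<^sub>R m - x0 = (1/(-t)) *\<^sub>R (m + t *\<^sub>R x0)" using tn by (simp add: algebra_simps)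
        finally have "(1/(-t)) * b - c \<le> (C * norm (m + t *\<^sub>R x0)) / (-t)" using tn by simp
        then have "(-t) * ((1/(-t)) * b - c) \<le> C * norm (m + t *\<^sub>R x0)" using tn
          by (simp add: field_simps)
        then show ?thesis using xa tn by (simp add: algebra_simps)
      qed
    qed
  qed
  moreover have "G \<subseteq> G'"
  proof
    fix p assume "p \<in> G"
    moreover have "p = (fst p + 0 *\<^sub>R x0, snd p + 0 * c)" by simp
    ultimately show "p \<in> G'" unfolding G'_def by (metis (mono_tags, lifting) CollectI prod.collapse)
  qed
  moreover have "(x0, c) = (0 + 1 *\<^sub>R x0, 0 + 1 * c)" by simp
  then have "(x0, c) \<in> G'" using G0 unfolding G'_def by blast
  then have "G' \<noteq> G" using x0(2) by force
  ultimately show ?thesis by blast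
qed

lemma real_HB:
  fixes S M :: "'b::real_normed_vector set" and u :: "'b \<Rightarrow> real"
  assumes S: "subspace S" and M: "subspace M" "M \<subseteq> S"
    and uadd: "\<And>x y. x\<in>M \<Longrightarrow> y\<in>M \<Longrightarrow> u (x + y) = u x + u y"
    and uscl: "\<And>r x. x\<in>M \<Longrightarrow> u (r *\<^sub>R x) = r * u x"
    and ubnd: "\<And>x. x\<in>M \<Longrightarrow> u x \<le> C * norm x" and C: "C \<ge> 0"
  shows "\<exists>U. (\<forall>x\<in>S. \<forall>y\<in>S. U (x + y) = U x + U y) \<and> (\<forall>r. \<forall>x\<in>S. U (r *\<^sub>R x) = r * U x)
     \<and> (\<forall>x\<in>M. U x = u x) \<and> (\<forall>x\<in>S. U x \<le> C * norm x)"
proof -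
  define A where "A = {G. hbgood S M u C G}"
  define Gu where "Gu = {(m, u m) | m. m \<in> M}"
  have Gu: "Gu \<in> A"
    unfolding A_def hbgood_def
  proof (intro CollectI conjI ballI allI impI subsetI)
    fix p q assume "p \<in> Gu" "q \<in> Gu"
    then obtain m n where "p = (m, u m)" "q = (n, u n)" "m \<in> M" "n \<in> M" unfolding Gu_def by blast
    moreover have "m + n \<in> M" using M(1) \<open>m \<in> M\<close> \<open>n \<in> M\<close> by (simp add: subspace_add)
    ultimately show "p + q \<in> Gu" unfolding Gu_def using uadd by auto
  next
    fix r p assume "p \<in> Gu"
    then obtain m where "p = (m, u m)" "m \<in> M" unfolding Gu_def by blast
    moreover have "r *\<^sub>R m \<in> M" using M(1) \<open>m \<in> M\<close> by (simp add: subspace_scale)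
    ultimately show "r *\<^sub>R p \<in> Gu" unfolding Gu_def using uscl by auto
  next
    fix p assume "p \<in> Gu"
    then show "p \<in> S \<times> UNIV" unfolding Gu_def using M(2) by auto
  next
    fix m assume "m \<in> M" then show "(m, u m) \<in> Gu" unfolding Gu_def by blast
  next
    fix x a assume "(x, a) \<in> Gu" then show "a \<le> C * norm x" unfolding Gu_def using ubnd by auto
  qed
  have "\<forall>Ch\<in>chains A. \<exists>U\<in>A. \<forall>X\<in>Ch. X \<subseteq> U"
  proof
    fix Ch assume ch: "Ch \<in> chains A"
    show "\<exists>U\<in>A. \<forall>X\<in>Ch. X \<subseteq> U"
    proof (cases "Ch = {}")
      case True then show ?thesis using Gu by auto
    next
      case False
      have CA: "Ch \<subseteq> A" and chn: "\<And>X Y. X\<in>Ch \<Longrightarrow> Y\<in>Ch \<Longrightarrow> X \<subseteq> Y \<or> Y \<subseteq> X"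
        using ch unfolding chains_def chain_subset_def by auto
      have "\<Union>Ch \<in> A"
        unfolding A_def hbgood_def
      proof (intro CollectI conjI ballI allI impI subsetI)
        fix p q assume "p \<in> \<Union>Ch" "q \<in> \<Union>Ch"
        then obtain X Y where "X\<in>Ch" "Y\<in>Ch" "p\<in>X" "q\<in>Y" by blast
        have gX: "hbgood S M u C X" and gY: "hbgood S M u C Y" using CA \<open>X\<in>Ch\<close> \<open>Y\<in>Ch\<close> unfolding A_def by auto
        have "p + q \<in> X \<or> p + q \<in> Y"
        proof (cases "X \<subseteq> Y")
          case True then show ?thesis using hbgood_D(1)[OF gY] \<open>p\<in>X\<close> \<open>q\<in>Y\<close> by blast
        next
          case False then have "Y \<subseteq> X" using chn[OF \<open>X\<in>Ch\<close> \<open>Y\<in>Ch\<close>] by blast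
          then show ?thesis using hbgood_D(1)[OF gX] \<open>p\<in>X\<close> \<open>q\<in>Y\<close> by blast
        qed
        then show "p + q \<in> \<Union>Ch" using \<open>X\<in>Ch\<close> \<open>Y\<in>Ch\<close> by blast
      next
        fix r p assume "p \<in> \<Union>Ch"
        then show "r *\<^sub>R p \<in> \<Union>Ch" using CA unfolding A_def hbgood_def by blast
      next
        fix p assume "p \<in> \<Union>Ch"
        then show "p \<in> S \<times> UNIV" using CA unfolding A_def hbgood_def by blast
      next
        fix m assume "m \<in> M"
        then show "(m, u m) \<in> \<Union>Ch" using CA False unfolding A_def hbgood_def by blast
      next
        fix x a assume "(x,a) \<in> \<Union>Ch"
        then show "a \<le> C * norm x" using CA unfolding A_def hbgood_def by blast
      qed
      then show ?thesis by blast
    qed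
  qed
  from Zorn_Lemma2[OF this] obtain G where GA: "G \<in> A" and maxG: "\<forall>X\<in>A. G \<subseteq> X \<longrightarrow> X = G" by blast
  have good: "hbgood S M u C G" using GA A_def by simp
  have "0 \<in> M" using M subspace_0 by blast
  then have Gne: "G \<noteq> {}" using good unfolding hbgood_def by blast
  have dom: "\<forall>x\<in>S. \<exists>a. (x,a) \<in> G"
  proof (rule ccontr)
    assume "\<not> ?thesis"
    then obtain x0 where "x0 \<in> S" "x0 \<notin> fst ` G" by force
    from hb_extend[OF good S this Gne C] obtain G' where "hbgood S M u C G'" "G \<subseteq> G'" "G' \<noteq> G" by blast
    then show False using maxG A_def by blast
  qed
  define U where "U x = (SOME a. (x,a) \<in> G)" for x
  have UG: "(x, U x) \<in> G" if "x \<in> S" for x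
    unfolding U_def using dom that by (metis someI_ex)
  have Uval: "U x = a" if "(x,a) \<in> G" for x a
  proof -
    have "x \<in> S" using good that unfolding hbgood_def by blast
    then show ?thesis using hbgood_func[OF good UG that] by simp
  qed
  show ?thesis
  proof (intro exI conjI ballI allI)
    fix x y assume "x \<in> S" "y \<in> S"
    then have "(x, U x) + (y, U y) \<in> G" using UG good unfolding hbgood_def by blast
    then show "U (x + y) = U x + U y" using Uval by simp
  next
    fix r x assume "x \<in> S"
    then have "r *\<^sub>R (x, U x) \<in> G" using UG good unfolding hbgood_def by blast
    then show "U (r *\<^sub>R x) = r * U x" using Uval by simp
  next
    fix x assume "x \<in> M"
    then show "U x = u x" using Uval good unfolding hbgood_def by blast
  next
    fix x assume "x \<in> S"
    then show "U x \<le> C * norm x" using UG good unfolding hbgood_def by blast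
  qed
qed

locale csc =
  fixes S :: "'b::real_normed_vector set" and sc :: "complex \<Rightarrow> 'b \<Rightarrow> 'b"
  assumes S: "subspace S" and scS: "\<And>c x. x\<in>S \<Longrightarrow> sc c x \<in> S"
  and sc_real: "\<And>r x. x\<in>S \<Longrightarrow> sc (complex_of_real r) x = r *\<^sub>R x"
  and sc_addl: "\<And>a b x. x\<in>S \<Longrightarrow> sc (a+b) x = sc a x + sc b x"
  and sc_addr: "\<And>c x y. x\<in>S \<Longrightarrow> y\<in>S \<Longrightarrow> sc c (x+y) = sc c x + sc c y"
  and sc_mult: "\<And>a b x. x\<in>S \<Longrightarrow> sc a (sc b x) = sc (a*b) x"
  and sc_norm: "\<And>c x. x\<in>S \<Longrightarrow> norm (sc c x) = cmod c * norm x"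
begin

lemma sc_decomp:
  assumes "x \<in> S"
  shows "sc c x = Re c *\<^sub>R x + Im c *\<^sub>R sc \<i> x"
proof -
  have "c = complex_of_real (Re c) + complex_of_real (Im c) * \<i>" by (simp add: complex_eq_iff)
  then have "sc c x = sc (complex_of_real (Re c)) x + sc (complex_of_real (Im c) * \<i>) x"
    using sc_addl[OF assms] by metis
  also have "sc (complex_of_real (Im c) * \<i>) x = sc (complex_of_real (Im c)) (sc \<i> x)"
    using sc_mult[OF assms] by simp
  finally show ?thesis using sc_real assms scS by simp
qed

lemma complex_HB:
  fixes M :: "'b set" and g :: "'b \<Rightarrow> complex"
  assumes M: "subspace M" "M \<subseteq> S" "\<And>c x. x\<in>M \<Longrightarrow> sc c x \<in> M"
  and gadd: "\<And>x y. x\<in>M \<Longrightarrow> y\<in>M \<Longrightarrow> g (x+y) = g x + g y"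
  and gscl: "\<And>c x. x\<in>M \<Longrightarrow> g (sc c x) = c * g x"
  and gbnd: "\<And>x. x\<in>M \<Longrightarrow> cmod (g x) \<le> C * norm x" and C: "C \<ge> 0"
  shows "\<exists>G. (\<forall>x\<in>S. \<forall>y\<in>S. G (x+y) = G x + G y) \<and> (\<forall>c. \<forall>x\<in>S. G (sc c x) = c * G x)
     \<and> (\<forall>x\<in>M. G x = g x) \<and> (\<forall>x\<in>S. cmod (G x) \<le> C * norm x)"
proof -
  define u where "u x = Re (g x)" for x
  have uadd: "\<And>x y. x\<in>M \<Longrightarrow> y\<in>M \<Longrightarrow> u (x + y) = u x + u y" using gadd u_def by simp
  have uscl: "u (r *\<^sub>R x) = r * u x" if "x\<in>M" for r x
  proof -
    have "r *\<^sub>R x = sc (complex_of_real r) x" using sc_real[of x r] that M(2) by auto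
    then show ?thesis using gscl[OF that] u_def by simp
  qed
  have ubnd: "u x \<le> C * norm x" if "x \<in> M" for x
    using gbnd[OF that] complex_Re_le_cmod[of "g x"] u_def by simp
  obtain U where Uadd: "\<And>x y. x\<in>S \<Longrightarrow> y\<in>S \<Longrightarrow> U (x + y) = U x + U y"
    and Uscl: "\<And>r x. x\<in>S \<Longrightarrow> U (r *\<^sub>R x) = r * U x"
    and UM: "\<And>x. x\<in>M \<Longrightarrow> U x = u x" and Ubnd: "\<And>x. x\<in>S \<Longrightarrow> U x \<le> C * norm x"
    using real_HB[OF S M(1) M(2) uadd uscl ubnd C] by blast
  define G where "G x = Complex (U x) (- U (sc \<i> x))" for x
  have Gadd: "G (x+y) = G x + G y" if "x\<in>S" "y\<in>S" for x y
    using that sc_addr[OF that, of \<i>] Uadd scS unfolding G_def by (simp add: complex_eq_iff)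
  have Gscl: "G (sc c x) = c * G x" if x: "x\<in>S" for c x
  proof -
    have ix: "sc \<i> x \<in> S" using scS x by blast
    have e1: "sc c x = Re c *\<^sub>R x + Im c *\<^sub>R sc \<i> x" using sc_decomp[OF x] .
    have "sc \<i> (sc c x) = sc (\<i> * c) x" using sc_mult x by blast
    also have "\<dots> = Re (\<i> * c) *\<^sub>R x + Im (\<i> * c) *\<^sub>R sc \<i> x" using sc_decomp[OF x] .
    finally have e2: "sc \<i> (sc c x) = (- Im c) *\<^sub>R x + Re c *\<^sub>R sc \<i> x" by simp
    have S1: "Re c *\<^sub>R x \<in> S" "Im c *\<^sub>R sc \<i> x \<in> S" "(- Im c) *\<^sub>R x \<in> S" "Re c *\<^sub>R sc \<i> x \<in> S"
      using S x ix subspace_scale[OF S] by blast+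
    have "U (sc c x) = Re c * U x + Im c * U (sc \<i> x)"
      using e1 Uadd[OF S1(1,2)] Uscl x ix by simp
    moreover have "U (sc \<i> (sc c x)) = (- Im c) * U x + Re c * U (sc \<i> x)"
      using e2 Uadd[OF S1(3,4)] Uscl[OF x, of "- Im c"] Uscl[OF ix, of "Re c"] by (simp del: scaleR_minus_left)
    ultimately show ?thesis unfolding G_def by (simp add: complex_eq_iff algebra_simps)
  qed
  have GM: "G x = g x" if "x \<in> M" for x
  proof -
    have "sc \<i> x \<in> M" using M(3) that by blast
    then have "U (sc \<i> x) = Re (g (sc \<i> x))" using UM u_def by simp
    also have "\<dots> = - Im (g x)" using gscl[OF that] by simp
    finally show ?thesis using UM[OF that] u_def unfolding G_def by (simp add: complex_eq_iff)
  qed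
  have ReG: "Re (G x) = U x" for x unfolding G_def by simp
  have Gbnd: "cmod (G x) \<le> C * norm x" if x: "x \<in> S" for x
  proof (cases "G x = 0")
    case True then show ?thesis using C by simp
  next
    case False
    define w where "w = cnj (G x) / complex_of_real (cmod (G x))"
    have cw: "cmod w = 1" using False unfolding w_def by (simp add: norm_divide)
    have n2: "cnj (G x) * G x = (complex_of_real (cmod (G x)))\<^sup>2"
      by (metis complex_norm_square mult.commute of_real_power)
    have "w * G x = cnj (G x) * G x / complex_of_real (cmod (G x))" unfolding w_def by simp
    also have "\<dots> = complex_of_real (cmod (G x))" using False unfolding n2 by (simp add: power2_eq_square)
    finally have "w * G x = complex_of_real (cmod (G x))" .
    then have "cmod (G x) = Re (G (sc w x))" using Gscl[OF x, of w] by simp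
    also have "\<dots> = U (sc w x)" by (rule ReG)
    also have "\<dots> \<le> C * norm (sc w x)" using Ubnd scS x by blast
    also have "\<dots> = C * norm x" using sc_norm[OF x] cw by simp
    finally show ?thesis .
  qed
  show ?thesis using Gadd Gscl GM Gbnd by blast
qed

end

context csc
begin

lemma sc_zero: "x \<in> S \<Longrightarrow> sc 0 x = 0"
  using sc_real[of x 0] by simp

lemma sc_one: "x \<in> S \<Longrightarrow> sc 1 x = x"
  using sc_real[of x 1] by simp

lemma dist_functional:
  assumes V: "subspace V" "V \<subseteq> S" "\<And>c x. x\<in>V \<Longrightarrow> sc c x \<in> V" and a: "a \<in> S"
  shows "\<exists>G. (\<forall>x\<in>S. \<forall>y\<in>S. G (x+y) = G x + G y) \<and> (\<forall>c. \<forall>x\<in>S. G (sc c x) = c * G x)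
     \<and> (\<forall>v\<in>V. G v = 0) \<and> (\<forall>x\<in>S. cmod (G x) \<le> norm x) \<and> G a = complex_of_real (infdist a V)"
proof (cases "infdist a V = 0")
  case True
  then show ?thesis by (intro exI[of _ "\<lambda>_. 0"]) auto
next
  case False
  define d where "d = infdist a V"
  have dpos: "d > 0" using False infdist_nonneg[of a V] d_def by simp
  have VS: "v \<in> S" if "v \<in> V" for v using V(2) that by blast
  have aV: "a \<notin> V" using False by auto
  have uniq: "s = s'" if "v \<in> V" "v' \<in> V" "v + sc s a = v' + sc s' a" for v v' s s'
  proof (rule ccontr)
    assume ne: "s \<noteq> s'"
    have "sc s a = sc s' a + sc (s - s') a" using sc_addl[OF a, of s' "s - s'"] by simp
    then have e: "sc (s - s') a = v' - v" using that(3) by (simp add: algebra_simps)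
    have "a = sc (1 / (s - s')) (sc (s - s') a)" using sc_mult[OF a] ne sc_one[OF a] by simp
    also have "\<dots> = sc (1 / (s - s')) (v' - v)" using e by simp
    also have "\<dots> \<in> V" using V(3) subspace_diff[OF V(1) that(2) that(1)] by blast
    finally show False using aV by blast
  qed
  define M where "M = {v + sc s a | v s. v \<in> V}"
  define coef where "coef m = (THE s. \<exists>v\<in>V. m = v + sc s a)" for m
  have coef: "coef (v + sc s a) = s" if "v \<in> V" for v s
    unfolding coef_def by (rule the_equality) (use that uniq in blast)+
  define g where "g m = coef m * complex_of_real d" for m
  have M0: "0 \<in> M" unfolding M_def using subspace_0[OF V(1)] sc_zero[OF a]
    by (rule_tac CollectI, rule_tac x=0 in exI, rule_tac x=0 in exI) simp
  have Madd: "(v + sc s a) + (v' + sc s' a) = (v + v') + sc (s + s') a" for v v' s s'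
    using sc_addl[OF a] by (simp add: algebra_simps)
  have Mscl: "r *\<^sub>R (v + sc s a) = r *\<^sub>R v + sc (complex_of_real r * s) a" if "v \<in> V" for r v s
  proof -
    have "r *\<^sub>R sc s a = sc (complex_of_real r) (sc s a)" using sc_real scS a by simp
    then show ?thesis using sc_mult[OF a] by (simp add: scaleR_add_right)
  qed
  have Msc: "sc c (v + sc s a) = sc c v + sc (c * s) a" if "v \<in> V" for c v s
    using sc_addr[OF VS[OF that] scS[OF a]] sc_mult[OF a] by simp
  have Msub: "subspace M"
    unfolding subspace_def
  proof (intro conjI ballI allI)
    show "0 \<in> M" by (rule M0)
  next
    fix x y assume "x \<in> M" "y \<in> M"
    then obtain v s v' s' where "x = v + sc s a" "y = v' + sc s' a" "v\<in>V" "v'\<in>V" unfolding M_def by blast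
    then show "x + y \<in> M" unfolding M_def using Madd subspace_add[OF V(1)] by blast
  next
    fix r x assume "x \<in> M"
    then obtain v s where "x = v + sc s a" "v\<in>V" unfolding M_def by blast
    then show "r *\<^sub>R x \<in> M" unfolding M_def using Mscl subspace_scale[OF V(1)] by blast
  qed
  have MS: "M \<subseteq> S" unfolding M_def using VS scS[OF a] subspace_add[OF S] by blast
  have Mc: "sc c x \<in> M" if xM: "x \<in> M" for c x
  proof -
    obtain v s where "x = v + sc s a" "v\<in>V" using xM unfolding M_def by blast
    then show ?thesis unfolding M_def using Msc V(3) by blast
  qed
  have gadd: "g (x+y) = g x + g y" if xM: "x\<in>M" "y\<in>M" for x y
  proof -
    obtain v s v' s' where "x = v + sc s a" "y = v' + sc s' a" "v\<in>V" "v'\<in>V" using xM unfolding M_def by blast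
    moreover have "coef ((v + v') + sc (s + s') a) = s + s'" using coef subspace_add[OF V(1)] \<open>v\<in>V\<close> \<open>v'\<in>V\<close> by blast
    ultimately show ?thesis unfolding g_def using Madd coef by (simp add: algebra_simps)
  qed
  have gscl: "g (sc c x) = c * g x" if xM: "x\<in>M" for c x
  proof -
    obtain v s where "x = v + sc s a" "v\<in>V" using xM unfolding M_def by blast
    then show ?thesis unfolding g_def using Msc coef V(3) by simp
  qed
  have gbnd: "cmod (g x) \<le> 1 * norm x" if xM: "x\<in>M" for x
  proof -
    obtain v s where x: "x = v + sc s a" and v: "v\<in>V" using xM unfolding M_def by blast
    show ?thesis
    proof (cases "s = 0")
      case True then show ?thesis using x v coef unfolding g_def by simp
    next
      case False
      have w: "- sc (1/s) v \<in> V" using V(3)[OF v] subspace_neg[OF V(1)] by blast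
      have "sc s (sc (1/s) v + a) = sc s (sc (1/s) v) + sc s a" using sc_addr scS VS[OF v] a by blast
      also have "sc s (sc (1/s) v) = v" using sc_mult VS[OF v] False sc_one by simp
      finally have e: "x = sc s (a - (- sc (1/s) v))" using x by (simp add: algebra_simps)
      have "a - (- sc (1/s) v) \<in> S" using a scS VS[OF v] subspace_add[OF S] by simp
      then have "norm x = cmod s * norm (a - (- sc (1/s) v))" using e sc_norm by simp
      moreover have "d \<le> norm (a - (- sc (1/s) v))"
        unfolding d_def using infdist_le[OF w, of a] by (simp add: dist_norm)
      ultimately have "cmod s * d \<le> norm x" by (simp add: mult_left_mono)
      then show ?thesis using x v coef dpos unfolding g_def by (simp add: norm_mult)
    qed
  qed
  obtain G where G: "\<forall>x\<in>S. \<forall>y\<in>S. G (x+y) = G x + G y" "\<forall>c. \<forall>x\<in>S. G (sc c x) = c * G x"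
     "\<forall>x\<in>M. G x = g x" "\<forall>x\<in>S. cmod (G x) \<le> 1 * norm x"
    using complex_HB[OF Msub MS Mc gadd gscl gbnd] by auto
  have "G v = 0" if "v \<in> V" for v
  proof -
    have "v = v + sc 0 a" using sc_zero[OF a] by simp
    then have "v \<in> M" unfolding M_def using that by blast
    then show ?thesis using G(3) coef[OF that, of 0] sc_zero[OF a] g_def by simp
  qed
  moreover have "G a = complex_of_real d"
  proof -
    have "a = 0 + sc 1 a" using sc_one[OF a] by simp
    then have "a \<in> M" unfolding M_def using subspace_0[OF V(1)] by blast
    then show ?thesis using G(3) coef[OF subspace_0[OF V(1)], of 1] sc_one[OF a] g_def by simp
  qed
  ultimately show ?thesis using G d_def by auto
qed

lemma norming_functional:
  assumes a: "a \<in> S"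
  shows "\<exists>G. (\<forall>x\<in>S. \<forall>y\<in>S. G (x+y) = G x + G y) \<and> (\<forall>c. \<forall>x\<in>S. G (sc c x) = c * G x)
     \<and> (\<forall>x\<in>S. cmod (G x) \<le> norm x) \<and> G a = complex_of_real (norm a)"
proof -
  have V: "subspace {0}" "{0} \<subseteq> S" "\<And>c x. x\<in>{0} \<Longrightarrow> sc c x \<in> {0}"
    using subspace_0[OF S] sc_real[of 0 0] subspace_single_0 sc_mult
    by (auto simp: subspace_def) (metis sc_norm norm_eq_zero mult_zero_right norm_zero)
  have "infdist a {0} = norm a" by (simp add: infdist_def dist_norm)
  then show ?thesis using dist_functional[OF V a] by metis
qed

end

lemma csc_A: "csc (UNIV::'a::cnormed_vector set) scaleC"
  by unfold_locales (auto simp: scaleC_scaleR scaleC_add_right scaleC_add_left scaleC_scaleC norm_scaleC)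

lemma bl_cmult: fixes f :: "'a::real_normed_vector \<Rightarrow>\<^sub>L complex" shows "bounded_linear (\<lambda>x. c * blinfun_apply f x)"
  using bounded_linear_compose[OF bounded_linear_mult_right[of c] blinfun.bounded_linear_right[of f]] by simp

lemma cscale_apply [simp]: "blinfun_apply (cscale c f) x = c * blinfun_apply f x"
  unfolding cscale_def by (simp add: bounded_linear_Blinfun_apply[OF bl_cmult])

lemma cdual_iff: "f \<in> cdual \<longleftrightarrow> (\<forall>c x. blinfun_apply f (scaleC c x) = c * blinfun_apply f x)"
  unfolding cdual_def by simp

lemma cdual_cscale: "f \<in> cdual \<Longrightarrow> cscale c f \<in> cdual"
  unfolding cdual_def by (simp add: mult.left_commute)

lemma cdual_add: "f \<in> cdual \<Longrightarrow> g \<in> cdual \<Longrightarrow> f + g \<in> cdual"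
  unfolding cdual_def by (simp add: blinfun.add_left distrib_left)

lemma cdual_scaleR: "f \<in> cdual \<Longrightarrow> r *\<^sub>R f \<in> cdual"
  unfolding cdual_def by (simp add: blinfun.scaleR_left scaleR_conv_of_real mult.left_commute)

lemma cdual_zero: "0 \<in> cdual"
  unfolding cdual_def by simp

lemma cdual_minus: "f \<in> cdual \<Longrightarrow> - f \<in> cdual"
  using cdual_scaleR[of f "-1"] by simp

lemma cdual_diff: "f \<in> cdual \<Longrightarrow> g \<in> cdual \<Longrightarrow> f - g \<in> cdual"
  using cdual_add[OF _ cdual_minus] by (metis diff_conv_add_uminus)

lemma subspace_cdual: "subspace cdual"
  unfolding subspace_def using cdual_zero cdual_add cdual_scaleR by blast

lemma norm_cscale_le: "norm (cscale c f) \<le> cmod c * norm f"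
  by (rule norm_blinfun_bound) (auto simp: norm_mult mult.assoc intro!: mult_left_mono norm_blinfun)

lemma cscale_cscale: "cscale a (cscale b f) = cscale (a * b) f"
  by (rule blinfun_eqI) (simp add: mult.assoc)

lemma cscale_one: "cscale 1 f = f"
  by (rule blinfun_eqI) simp

lemma norm_cscale: "norm (cscale c f) = cmod c * norm f"
proof (cases "c = 0")
  case True
  have "cscale c f = 0" by (rule blinfun_eqI) (simp add: True)
  then show ?thesis using True by simp
next
  case False
  have "f = cscale (1/c) (cscale c f)" using False by (simp add: cscale_cscale cscale_one)
  then have "norm f \<le> cmod (1/c) * norm (cscale c f)" by (metis norm_cscale_le)
  then have "cmod c * norm f \<le> norm (cscale c f)" using False
    by (simp add: norm_divide field_simps)
  then show ?thesis using norm_cscale_le[of c f] by simp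
qed

lemma csc_D: "csc cdual cscale"
proof unfold_locales
  show "subspace cdual" by (rule subspace_cdual)
qed (auto simp: cdual_cscale cscale_cscale norm_cscale intro!: blinfun_eqI
      simp: blinfun.add_left blinfun.scaleR_left scaleR_conv_of_real distrib_left distrib_right)

lemma to_cdual:
  fixes G :: "'a::cnormed_vector \<Rightarrow> complex"
  assumes add: "\<And>x y. G (x + y) = G x + G y" and scl: "\<And>c x. G (scaleC c x) = c * G x"
    and bnd: "\<And>x. cmod (G x) \<le> K * norm x" and K: "K \<ge> 0"
  shows "Blinfun G \<in> cdual \<and> blinfun_apply (Blinfun G) = G \<and> norm (Blinfun G) \<le> K"
proof -
  have bl: "bounded_linear G"
  proof (rule bounded_linear_intro[where K=K])
    show "G (r *\<^sub>R x) = r *\<^sub>R G x" for r x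
      using scl[of "complex_of_real r" x] by (simp add: scaleC_scaleR scaleR_conv_of_real)
  qed (use add bnd in \<open>auto simp: mult.commute\<close>)
  then have ap: "blinfun_apply (Blinfun G) = G" by (rule bounded_linear_Blinfun_apply)
  moreover have "Blinfun G \<in> cdual" unfolding cdual_def using ap scl by simp
  moreover have "norm (Blinfun G) \<le> K" using norm_blinfun_bound[OF K, of "Blinfun G"] ap bnd by simp
  ultimately show ?thesis by blast
qed

lemma csubspace_UNIV_D:
  assumes "csubspace_in scaleC UNIV (V::'a::cnormed_vector set)"
  shows "subspace V" "\<And>c x. x \<in> V \<Longrightarrow> scaleC c x \<in> V"
  using assms unfolding csubspace_in_def subspace_def
  by (auto simp flip: scaleC_scaleR)

lemma annih_sub: "annih V \<subseteq> cdual"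
  unfolding annih_def by blast

lemma annih_zero: "0 \<in> annih V"
  unfolding annih_def using cdual_zero by simp

lemma annih_scaleR: "f \<in> annih V \<Longrightarrow> r *\<^sub>R f \<in> annih V"
  unfolding annih_def using cdual_scaleR by (auto simp: blinfun.scaleR_left)

lemma annih_diff: "f \<in> annih V \<Longrightarrow> g \<in> annih V \<Longrightarrow> f - g \<in> annih V"
  unfolding annih_def using cdual_diff by (auto simp: blinfun.diff_left)

lemma csubspace_annih: "csubspace_in cscale cdual (annih V)"
  unfolding csubspace_in_def annih_def
  using cdual_zero cdual_add cdual_cscale by (auto simp: blinfun.add_left)

lemma HB_dist_A:
  fixes V :: "'a::cnormed_vector set"
  assumes "csubspace_in scaleC UNIV V"
  shows "\<exists>\<phi>\<in>annih V. norm \<phi> \<le> 1 \<and> blinfun_apply \<phi> a = complex_of_real (infdist a V)"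
proof -
  obtain G where G: "\<forall>x\<in>UNIV. \<forall>y\<in>UNIV. G (x+y) = G x + G y" "\<forall>c. \<forall>x\<in>UNIV. G (scaleC c x) = c * G x"
     "\<forall>v\<in>V. G v = 0" "\<forall>x\<in>UNIV. cmod (G x) \<le> norm x" "G a = complex_of_real (infdist a V)"
    using csc.dist_functional[OF csc_A csubspace_UNIV_D(1)[OF assms] subset_UNIV csubspace_UNIV_D(2)[OF assms] UNIV_I, of a] by blast
  have "Blinfun G \<in> cdual \<and> blinfun_apply (Blinfun G) = G \<and> norm (Blinfun G) \<le> 1"
    by (rule to_cdual) (use G in auto)
  then show ?thesis using G(3,5) unfolding annih_def by (intro bexI[of _ "Blinfun G"]) auto
qed

lemma HB_norming_A:
  fixes a :: "'a::cnormed_vector"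
  shows "\<exists>\<phi>\<in>cdual. norm \<phi> \<le> 1 \<and> blinfun_apply \<phi> a = complex_of_real (norm a)"
proof -
  obtain G where G: "\<forall>x\<in>UNIV. \<forall>y\<in>UNIV. G (x+y) = G x + G y" "\<forall>c. \<forall>x\<in>UNIV. G (scaleC c x) = c * G x"
     "\<forall>x\<in>UNIV. cmod (G x) \<le> norm x" "G a = complex_of_real (norm a)"
    using csc.norming_functional[OF csc_A UNIV_I, of a] by blast
  have "Blinfun G \<in> cdual \<and> blinfun_apply (Blinfun G) = G \<and> norm (Blinfun G) \<le> 1"
    by (rule to_cdual) (use G in auto)
  then show ?thesis using G(4) by (intro bexI[of _ "Blinfun G"]) auto
qed

lemma HB_ext_A:
  fixes V :: "'a::cnormed_vector set"
  assumes V: "csubspace_in scaleC UNIV V" and \<phi>: "\<phi> \<in> cdual" and t: "t \<ge> 0"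
    and b: "\<And>v. v \<in> V \<Longrightarrow> cmod (blinfun_apply \<phi> v) \<le> t * norm v"
  shows "infdist \<phi> (annih V) \<le> t"
proof -
  have VU: "V \<subseteq> UNIV" by simp
  obtain G where G: "\<forall>x\<in>UNIV. \<forall>y\<in>UNIV. G (x+y) = G x + G y" "\<forall>c. \<forall>x\<in>UNIV. G (scaleC c x) = c * G x"
     "\<forall>x\<in>V. G x = blinfun_apply \<phi> x" "\<forall>x\<in>UNIV. cmod (G x) \<le> t * norm x"
    using csc.complex_HB[OF csc_A csubspace_UNIV_D(1)[OF V] VU csubspace_UNIV_D(2)[OF V]
        blinfun.add_right _ b t] \<phi> unfolding cdual_def by blast
  have P: "Blinfun G \<in> cdual \<and> blinfun_apply (Blinfun G) = G \<and> norm (Blinfun G) \<le> t"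
    by (rule to_cdual) (use G t in auto)
  have "\<phi> - Blinfun G \<in> annih V"
    unfolding annih_def using cdual_diff[OF \<phi>] P G(3) by (auto simp: blinfun.diff_left)
  then have "infdist \<phi> (annih V) \<le> dist \<phi> (\<phi> - Blinfun G)" by (rule infdist_le)
  also have "\<dots> = norm (Blinfun G)" by (simp add: dist_norm)
  finally show ?thesis using P by simp
qed

lemma HB_norming_D:
  assumes "\<psi> \<in> (cdual :: ('a::cnormed_vector \<Rightarrow>\<^sub>L complex) set)"
  shows "\<exists>\<Phi>. (\<forall>f\<in>cdual. \<forall>g\<in>cdual. \<Phi> (f + g) = \<Phi> f + \<Phi> g) \<and> (\<forall>c. \<forall>f\<in>cdual. \<Phi> (cscale c f) = c * \<Phi> f)
     \<and> (\<forall>f\<in>cdual. cmod (\<Phi> f) \<le> norm f) \<and> \<Phi> \<psi> = complex_of_real (norm \<psi>)"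
  using csc.norming_functional[OF csc_D assms] by blast

lemma openin_ball_B: "openin (top_of_set B) (ball p r \<inter> B)"
  using openin_open_Int[OF open_ball, of B p r] by (simp add: Int_commute)

lemma lv_nbhd:
  assumes cont: "continuous_map X (lower_vietoris sc B) \<kappa>" and x: "x \<in> topspace X"
    and sub: "\<forall>y\<in>topspace X. csubspace_in sc B (\<kappa> y)" and p: "p \<in> \<kappa> x" and r: "r > 0"
  shows "\<exists>W. openin X W \<and> x \<in> W \<and> (\<forall>y\<in>W. \<exists>q\<in>\<kappa> y. dist q p < r)"
proof -
  define U where "U = ball p r \<inter> B"
  define Ob where "Ob = {V. csubspace_in sc B V \<and> V \<inter> U \<noteq> {}}"
  have "openin (lower_vietoris sc B) Ob"
    unfolding lower_vietoris_def Ob_def U_def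
    by (rule topology_generated_by_Basis) (use openin_ball_B in blast)
  then have W: "openin X {y \<in> topspace X. \<kappa> y \<in> Ob}"
    using openin_continuous_map_preimage[OF cont] by blast
  have "p \<in> B" using sub x p unfolding csubspace_in_def by blast
  then have "x \<in> {y \<in> topspace X. \<kappa> y \<in> Ob}" using x sub p r unfolding Ob_def U_def by auto
  moreover have "\<forall>y\<in>{y \<in> topspace X. \<kappa> y \<in> Ob}. \<exists>q\<in>\<kappa> y. dist q p < r"
    unfolding Ob_def U_def by (auto simp: dist_commute)
  ultimately show ?thesis using W by blast
qed

lemma lv_intro:
  assumes sub: "\<forall>y\<in>topspace X. csubspace_in sc B (\<kappa> y)"
    and H: "\<And>x p r. x \<in> topspace X \<Longrightarrow> p \<in> \<kappa> x \<Longrightarrow> r > 0 \<Longrightarrow>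
               \<exists>W. openin X W \<and> x \<in> W \<and> (\<forall>y\<in>W. \<exists>q\<in>\<kappa> y. dist q p < r)"
  shows "continuous_map X (lower_vietoris sc B) \<kappa>"
  unfolding lower_vietoris_def
proof (rule continuous_on_generated_topo)
  fix Ob assume "Ob \<in> {{V. csubspace_in sc B V \<and> V \<inter> U \<noteq> {}} | U. openin (top_of_set B) U}"
  then obtain U where Ob: "Ob = {V. csubspace_in sc B V \<and> V \<inter> U \<noteq> {}}" and U: "openin (top_of_set B) U" by blast
  show "openin X (\<kappa> -` Ob \<inter> topspace X)"
  proof (subst openin_subopen, intro ballI)
    fix x assume "x \<in> \<kappa> -` Ob \<inter> topspace X"
    then have x: "x \<in> topspace X" and "\<kappa> x \<inter> U \<noteq> {}" using Ob by auto
    then obtain p where p: "p \<in> \<kappa> x" "p \<in> U" by blast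
    obtain r where r: "r > 0" "ball p r \<inter> B \<subseteq> U" using U p(2) unfolding openin_contains_ball by blast
    obtain W where W: "openin X W" "x \<in> W" "\<forall>y\<in>W. \<exists>q\<in>\<kappa> y. dist q p < r" using H[OF x p(1) r(1)] by blast
    have "W \<subseteq> \<kappa> -` Ob \<inter> topspace X"
    proof
      fix y assume y: "y \<in> W"
      then have yt: "y \<in> topspace X" using W(1) openin_subset by blast
      obtain q where q: "q \<in> \<kappa> y" "dist q p < r" using W(3) y by blast
      have "q \<in> B" using sub yt q(1) unfolding csubspace_in_def by blast
      then have "q \<in> U" using r(2) q(2) by (auto simp: dist_commute)
      then show "y \<in> \<kappa> -` Ob \<inter> topspace X" using Ob q(1) sub yt by auto
    qed
    then show "\<exists>T. openin X T \<and> x \<in> T \<and> T \<subseteq> \<kappa> -` Ob \<inter> topspace X" using W by blast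
  qed
next
  show "\<kappa> ` topspace X \<subseteq> \<Union> {{V. csubspace_in sc B V \<and> V \<inter> U \<noteq> {}} | U. openin (top_of_set B) U}"
  proof
    fix V assume "V \<in> \<kappa> ` topspace X"
    then have V: "csubspace_in sc B V" using sub by auto
    then have "V \<inter> B \<noteq> {}" unfolding csubspace_in_def by blast
    then show "V \<in> \<Union> {{V. csubspace_in sc B V \<and> V \<inter> U \<noteq> {}} | U. openin (top_of_set B) U}"
      using V by blast
  qed
qed

lemma cont_crit:
  fixes f :: "'b::metric_space \<times> 'x \<Rightarrow> real"
  assumes H: "\<And>a x e. a \<in> B \<Longrightarrow> x \<in> topspace X \<Longrightarrow> e > 0 \<Longrightarrow>
     \<exists>r>0. \<exists>W. openin X W \<and> x \<in> W \<and> (\<forall>a'\<in>B. \<forall>y\<in>W. dist a' a < r \<longrightarrow> \<bar>f (a',y) - f (a,x)\<bar> < e)"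
  shows "continuous_map (prod_topology (top_of_set B) X) euclideanreal f"
proof -
  have "continuous_map (prod_topology (top_of_set B) X) Met_TC.mtopology f"
    unfolding Met_TC.continuous_map_to_metric
  proof (intro ballI allI impI)
    fix p e assume p: "p \<in> topspace (prod_topology (top_of_set B) X)" and e: "(e::real) > 0"
    obtain a x where px: "p = (a,x)" "a \<in> B" "x \<in> topspace X" using p by auto
    obtain r W where r: "r > 0" "openin X W" "x \<in> W" "\<forall>a'\<in>B. \<forall>y\<in>W. dist a' a < r \<longrightarrow> \<bar>f (a',y) - f (a,x)\<bar> < e"
      using H[OF px(2,3) e] by blast
    have "openin (prod_topology (top_of_set B) X) ((ball a r \<inter> B) \<times> W)"
      using openin_prod_Times_iff openin_ball_B r(2) by blast
    moreover have "p \<in> (ball a r \<inter> B) \<times> W" using px r by auto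
    moreover have "\<forall>q\<in>(ball a r \<inter> B) \<times> W. f q \<in> Met_TC.mball (f p) e"
      using r(4) px by (auto simp: dist_real_def dist_commute abs_minus_commute)
    ultimately show "\<exists>U. openin (prod_topology (top_of_set B) X) U \<and> p \<in> U \<and> (\<forall>y\<in>U. f y \<in> Met_TC.mball (f p) e)"
      by blast
  qed
  then show ?thesis by simp
qed

lemma dist_usc:
  assumes cont: "continuous_map X (lower_vietoris sc B) \<kappa>" and x: "x \<in> topspace X"
    and sub: "\<forall>y\<in>topspace X. csubspace_in sc B (\<kappa> y)" and e: "e > 0"
  shows "\<exists>r>0. \<exists>W. openin X W \<and> x \<in> W \<and> (\<forall>a'. \<forall>y\<in>W. dist a' a < r \<longrightarrow> infdist a' (\<kappa> y) < infdist a (\<kappa> x) + e)"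
proof -
  have ne: "\<kappa> x \<noteq> {}" using sub x unfolding csubspace_in_def by blast
  have "\<exists>p\<in>\<kappa> x. dist a p < infdist a (\<kappa> x) + e/3"
    using ne e cINF_less_iff[OF ne bdd_below_image_dist, of a "Inf (dist a ` \<kappa> x) + e/3"] unfolding infdist_def
    by auto
  then obtain p where p: "p \<in> \<kappa> x" "dist a p < infdist a (\<kappa> x) + e/3" by blast
  obtain W where W: "openin X W" "x \<in> W" "\<forall>y\<in>W. \<exists>q\<in>\<kappa> y. dist q p < e/3"
    using lv_nbhd[OF cont x sub p(1), of "e/3"] e by auto
  have "\<forall>a'. \<forall>y\<in>W. dist a' a < e/3 \<longrightarrow> infdist a' (\<kappa> y) < infdist a (\<kappa> x) + e"
  proof (intro allI ballI impI)
    fix a' y assume y: "y \<in> W" and a': "dist a' a < e/3"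
    obtain q where q: "q \<in> \<kappa> y" "dist q p < e/3" using W(3) y by blast
    have "infdist a' (\<kappa> y) \<le> dist a' q" by (rule infdist_le[OF q(1)])
    also have "\<dots> \<le> dist a' a + dist a p + dist p q" by (metis dist_triangle add.assoc add_le_cancel_left order_trans dist_triangle)
    finally show "infdist a' (\<kappa> y) < infdist a (\<kappa> x) + e" using a' p(2) q(2) by (simp add: dist_commute)
  qed
  then show ?thesis using W e by (intro exI[of _ "e/3"]) auto
qed

lemma lowbound1:
  fixes V :: "'a::cnormed_vector set"
  assumes phi: "\<phi> \<in> annih V" and ne: "V \<noteq> {}"
  shows "cmod (blinfun_apply \<phi> b) \<le> norm \<phi> * infdist b V"
proof (cases "\<phi> = 0")
  case True then show ?thesis by simp
next
  case False
  then have np: "norm \<phi> > 0" by simp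
  have "cmod (blinfun_apply \<phi> b) / norm \<phi> \<le> infdist b V"
    unfolding infdist_notempty[OF ne]
  proof (rule cINF_greatest[OF ne])
    fix v assume v: "v \<in> V"
    have "blinfun_apply \<phi> v = 0" using phi v unfolding annih_def by blast
    then have "blinfun_apply \<phi> b = blinfun_apply \<phi> (b - v)" by (simp add: blinfun.diff_right)
    then have "cmod (blinfun_apply \<phi> b) \<le> norm \<phi> * dist b v"
      using norm_blinfun[of \<phi> "b - v"] by (simp add: dist_norm)
    then show "cmod (blinfun_apply \<phi> b) / norm \<phi> \<le> dist b v"
      using np by (simp add: divide_le_eq mult.commute)
  qed
  then show ?thesis using np by (simp add: divide_le_eq mult.commute)
qed

lemma lowbound2:
  fixes V :: "'a::cnormed_vector set"
  assumes w: "w \<in> V"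
  shows "cmod (blinfun_apply \<psi> w) \<le> infdist \<psi> (annih V) * norm w"
proof (cases "w = 0")
  case True then show ?thesis by simp
next
  case False
  then have nw: "norm w > 0" by simp
  have ne: "annih V \<noteq> {}" using annih_zero by blast
  have "cmod (blinfun_apply \<psi> w) / norm w \<le> infdist \<psi> (annih V)"
    unfolding infdist_notempty[OF ne]
  proof (rule cINF_greatest[OF ne])
    fix cc assume c: "cc \<in> annih V"
    have "blinfun_apply cc w = 0" using c w unfolding annih_def by blast
    then have "blinfun_apply \<psi> w = blinfun_apply (\<psi> - cc) w" by (simp add: blinfun.diff_left)
    then have "cmod (blinfun_apply \<psi> w) \<le> dist \<psi> cc * norm w"
      using norm_blinfun[of "\<psi> - cc" w] by (simp add: dist_norm)
    then show "cmod (blinfun_apply \<psi> w) / norm w \<le> dist \<psi> cc"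
      using nw by (simp add: divide_le_eq)
  qed
  then show ?thesis using nw by (simp add: divide_le_eq)
qed

lemma exists_big:
  fixes V :: "'a::cnormed_vector set"
  assumes V: "csubspace_in scaleC UNIV V" and phi: "\<phi> \<in> cdual" and t: "0 \<le> t"
    and lt: "t < infdist \<phi> (annih V)"
  shows "\<exists>v\<in>V. norm v = 1 \<and> t < cmod (blinfun_apply \<phi> v)"
proof (rule ccontr)
  assume "\<not> ?thesis"
  then have H: "\<And>v. v \<in> V \<Longrightarrow> norm v = 1 \<Longrightarrow> cmod (blinfun_apply \<phi> v) \<le> t" by force
  have "cmod (blinfun_apply \<phi> v) \<le> t * norm v" if v: "v \<in> V" for v
  proof (cases "v = 0")
    case True then show ?thesis by simp
  next
    case False
    then have nv: "norm v > 0" by simp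
    have "(1 / norm v) *\<^sub>R v \<in> V" using subspace_scale[OF csubspace_UNIV_D(1)[OF V] v] .
    moreover have "norm ((1 / norm v) *\<^sub>R v) = 1" using nv by simp
    ultimately have "cmod (blinfun_apply \<phi> ((1 / norm v) *\<^sub>R v)) \<le> t" by (rule H)
    then have "cmod (blinfun_apply \<phi> v) / norm v \<le> t" using nv by (simp add: blinfun.scaleR_right)
    then show ?thesis using nv by (simp add: divide_le_eq)
  qed
  then have "infdist \<phi> (annih V) \<le> t" using HB_ext_A[OF V phi t] by blast
  then show False using lt by simp
qed

lemma arith_lsc:
  fixes r d K e D :: real
  assumes "0 < r" "0 < e" "r * (d + K) < e" "d - r * K \<le> (1 + r) * D"
  shows "d - e < D"
proof -
  have re: "0 < r * e" using assms by simp
  have a3: "r * d + r * K < e" using assms(3) by (simp add: algebra_simps)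
  have a4: "d - r * K \<le> D + r * D" using assms(4) by (simp add: algebra_simps)
  have "(1 + r) * (d - e) = d + r * d - e - r * e" "(1 + r) * D = D + r * D"
    by (simp_all add: algebra_simps)
  then have "(1 + r) * (d - e) < (1 + r) * D" using re a3 a4 by linarith
  then show ?thesis using assms(1) by (simp add: mult_less_cancel_left_pos)
qed

lemma arith_choose:
  fixes d K e :: real
  assumes e: "e > 0"
  shows "\<exists>r>0. r \<le> 1 \<and> r * (d + K) < e"
proof -
  define M where "M = \<bar>d\<bar> + \<bar>K\<bar> + 1"
  have M: "M > 0" "d + K \<le> M" unfolding M_def by auto
  define r where "r = min 1 (e / (2 * M))"
  have r: "r > 0" "r \<le> 1" "r \<le> e / (2 * M)" using M e unfolding r_def by auto
  have "r * (d + K) \<le> r * M" using r M by (simp add: mult_left_mono)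
  also have "r * M \<le> e / 2"
  proof -
    have "r * (2 * M) \<le> e" using r(3) M(1) by (simp add: le_divide_eq)
    then show ?thesis by simp
  qed
  finally show ?thesis using r e by (intro exI[of _ r]) auto
qed

lemma dA_lsc:
  fixes \<kappa> :: "'x \<Rightarrow> 'a::cnormed_vector set"
  assumes contD: "continuous_map X (lower_vietoris cscale cdual) (annih \<circ> \<kappa>)"
    and x: "x \<in> topspace X" and sub: "\<forall>y\<in>topspace X. csubspace_in scaleC UNIV (\<kappa> y)" and e: "e > 0"
  shows "\<exists>r>0. \<exists>W. openin X W \<and> x \<in> W \<and> (\<forall>a'. \<forall>y\<in>W. dist a' a < r \<longrightarrow> infdist a (\<kappa> x) - e < infdist a' (\<kappa> y))"
proof -
  define d where "d = infdist a (\<kappa> x)"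
  obtain \<phi>0 where p0: "\<phi>0 \<in> annih (\<kappa> x)" "norm \<phi>0 \<le> 1" "blinfun_apply \<phi>0 a = complex_of_real d"
    using HB_dist_A[of "\<kappa> x" a] sub x d_def by blast
  define K where "K = norm a + 2"
  obtain r where r: "r > 0" "r \<le> 1" "r * (d + K) < e" using arith_choose[OF e] by blast
  have subD: "\<forall>y\<in>topspace X. csubspace_in cscale cdual ((annih \<circ> \<kappa>) y)" by (auto intro: csubspace_annih)
  obtain W where W: "openin X W" "x \<in> W" "\<forall>y\<in>W. \<exists>q\<in>(annih \<circ> \<kappa>) y. dist q \<phi>0 < r"
    using lv_nbhd[OF contD x subD, of \<phi>0 r] p0(1) r(1) by auto
  have "\<forall>a'. \<forall>y\<in>W. dist a' a < r \<longrightarrow> d - e < infdist a' (\<kappa> y)"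
  proof (intro allI ballI impI)
    fix a' y assume y: "y \<in> W" and a': "dist a' a < r"
    have yt: "y \<in> topspace X" using W(1) y openin_subset by blast
    obtain \<phi> where ph: "\<phi> \<in> annih (\<kappa> y)" "dist \<phi> \<phi>0 < r" using W(3) y by auto
    define D where "D = infdist a' (\<kappa> y)"
    have D0: "D \<ge> 0" unfolding D_def by (rule infdist_nonneg)
    have ne: "\<kappa> y \<noteq> {}" using sub yt unfolding csubspace_in_def by blast
    have nph: "norm \<phi> \<le> 1 + r"
      using norm_triangle_ineq[of "\<phi> - \<phi>0" \<phi>0] p0(2) ph(2) by (simp add: dist_norm)
    have c1: "cmod (blinfun_apply \<phi> a') \<le> (1 + r) * D"
      using lowbound1[OF ph(1) ne, of a'] mult_right_mono[OF nph D0] unfolding D_def by linarith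
    have d0: "d \<ge> 0" unfolding d_def by (rule infdist_nonneg)
    have c0: "d = cmod (blinfun_apply \<phi>0 a)" using p0(3) d0 by simp
    have tri: "cmod (blinfun_apply \<phi>0 a) \<le> cmod (blinfun_apply \<phi> a') + cmod (blinfun_apply (\<phi>0 - \<phi>) a)
        + cmod (blinfun_apply \<phi> (a - a'))"
    proof -
      have "blinfun_apply \<phi>0 a = blinfun_apply \<phi> a' + blinfun_apply (\<phi>0 - \<phi>) a + blinfun_apply \<phi> (a - a')"
        by (simp add: blinfun.diff_left blinfun.diff_right)
      then show ?thesis by (metis norm_triangle_ineq order_trans add_right_mono)
    qed
    have c2: "cmod (blinfun_apply (\<phi>0 - \<phi>) a) \<le> r * norm a"
    proof -
      have "cmod (blinfun_apply (\<phi>0 - \<phi>) a) \<le> norm (\<phi>0 - \<phi>) * norm a" by (rule norm_blinfun)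
      also have "\<dots> \<le> r * norm a" using ph(2) by (intro mult_right_mono) (auto simp: dist_norm norm_minus_commute)
      finally show ?thesis .
    qed
    have c3: "cmod (blinfun_apply \<phi> (a - a')) \<le> 2 * r"
    proof -
      have "cmod (blinfun_apply \<phi> (a - a')) \<le> norm \<phi> * norm (a - a')" by (rule norm_blinfun)
      also have "\<dots> \<le> (1 + r) * r" using nph a' r by (intro mult_mono) (auto simp: dist_norm norm_minus_commute)
      also have "\<dots> \<le> 2 * r" using r by (simp add: algebra_simps)
      finally show ?thesis .
    qed
    have "d - r * K \<le> (1 + r) * D" using c0 tri c1 c2 c3 unfolding K_def by (simp add: algebra_simps)
    then show "d - e < infdist a' (\<kappa> y)" using arith_lsc[OF r(1) e r(3)] D_def by blast
  qed
  then show ?thesis using W r(1) d_def by blast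
qed

lemma dD_lsc:
  fixes \<kappa> :: "'x \<Rightarrow> 'a::cnormed_vector set"
  assumes contA: "continuous_map X (lower_vietoris scaleC UNIV) \<kappa>"
    and x: "x \<in> topspace X" and sub: "\<forall>y\<in>topspace X. csubspace_in scaleC UNIV (\<kappa> y)" and e: "e > 0"
    and phi: "\<phi> \<in> cdual"
  shows "\<exists>r>0. \<exists>W. openin X W \<and> x \<in> W \<and> (\<forall>\<phi>'. \<forall>y\<in>W. dist \<phi>' \<phi> < r \<longrightarrow>
     infdist \<phi> (annih (\<kappa> x)) - e < infdist \<phi>' (annih (\<kappa> y)))"
proof (cases "infdist \<phi> (annih (\<kappa> x)) < e")
  case True
  have "\<forall>\<phi>'. \<forall>y\<in>topspace X. dist \<phi>' \<phi> < 1 \<longrightarrow> infdist \<phi> (annih (\<kappa> x)) - e < infdist \<phi>' (annih (\<kappa> y))"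
    using True infdist_nonneg by (smt (verit))
  then show ?thesis using x by (intro exI[of _ 1]) auto
next
  case False
  define E where "E = infdist \<phi> (annih (\<kappa> x))"
  define t where "t = E - e/2"
  have t: "0 \<le> t" "t < E" using False e unfolding t_def E_def by auto
  obtain v0 where v0: "v0 \<in> \<kappa> x" "norm v0 = 1" "t < cmod (blinfun_apply \<phi> v0)"
    using exists_big[of "\<kappa> x" \<phi> t] sub x phi t unfolding E_def by blast
  define K where "K = norm \<phi> + 2"
  have e2: "e/2 > 0" using e by simp
  obtain r where r: "r > 0" "r \<le> 1" "r * (t + K) < e/2" using arith_choose[OF e2] by blast
  obtain W where W: "openin X W" "x \<in> W" "\<forall>y\<in>W. \<exists>q\<in>\<kappa> y. dist q v0 < r"
    using lv_nbhd[OF contA x sub v0(1) r(1)] by auto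
  have "\<forall>\<phi>'. \<forall>y\<in>W. dist \<phi>' \<phi> < r \<longrightarrow> t - e/2 < infdist \<phi>' (annih (\<kappa> y))"
  proof (intro allI ballI impI)
    fix \<phi>' y assume y: "y \<in> W" and ph': "dist \<phi>' \<phi> < r"
    obtain q where q: "q \<in> \<kappa> y" "dist q v0 < r" using W(3) y by blast
    define D where "D = infdist \<phi>' (annih (\<kappa> y))"
    have D0: "D \<ge> 0" unfolding D_def by (rule infdist_nonneg)
    have nq: "norm q \<le> 1 + r"
      using norm_triangle_ineq[of "q - v0" v0] v0(2) q(2) by (simp add: dist_norm)
    have c1: "cmod (blinfun_apply \<phi>' q) \<le> (1 + r) * D"
      using lowbound2[OF q(1), of \<phi>'] mult_left_mono[OF nq D0] unfolding D_def by (simp add: mult.commute)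
    have tri: "cmod (blinfun_apply \<phi> v0) \<le> cmod (blinfun_apply \<phi>' q) + cmod (blinfun_apply \<phi> (v0 - q))
        + cmod (blinfun_apply (\<phi> - \<phi>') q)"
    proof -
      have "blinfun_apply \<phi> v0 = blinfun_apply \<phi>' q + blinfun_apply \<phi> (v0 - q) + blinfun_apply (\<phi> - \<phi>') q"
        by (simp add: blinfun.diff_left blinfun.diff_right)
      then show ?thesis by (metis norm_triangle_ineq order_trans add_right_mono)
    qed
    have c2: "cmod (blinfun_apply \<phi> (v0 - q)) \<le> norm \<phi> * r"
    proof -
      have "cmod (blinfun_apply \<phi> (v0 - q)) \<le> norm \<phi> * norm (v0 - q)" by (rule norm_blinfun)
      also have "\<dots> \<le> norm \<phi> * r" using q(2) by (intro mult_left_mono) (auto simp: dist_norm norm_minus_commute)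
      finally show ?thesis .
    qed
    have c3: "cmod (blinfun_apply (\<phi> - \<phi>') q) \<le> 2 * r"
    proof -
      have "cmod (blinfun_apply (\<phi> - \<phi>') q) \<le> norm (\<phi> - \<phi>') * norm q" by (rule norm_blinfun)
      also have "\<dots> \<le> r * (1 + r)" using nq ph' r by (intro mult_mono) (auto simp: dist_norm norm_minus_commute)
      also have "\<dots> \<le> 2 * r" using r by (simp add: algebra_simps)
      finally show ?thesis .
    qed
    have "t - r * K \<le> (1 + r) * D" using v0(3) tri c1 c2 c3 unfolding K_def by (simp add: algebra_simps)
    then show "t - e/2 < infdist \<phi>' (annih (\<kappa> y))" using arith_lsc[OF r(1) e2 r(3)] D_def by blast
  qed
  moreover have "t - e/2 = infdist \<phi> (annih (\<kappa> x)) - e" unfolding t_def E_def by simp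
  ultimately show ?thesis using W r(1) by (intro exI[of _ r]) auto
qed

lemma cont_from_semi:
  fixes f :: "'b::metric_space \<times> 'x \<Rightarrow> real"
  assumes U: "\<And>a x e. a\<in>B \<Longrightarrow> x\<in>topspace X \<Longrightarrow> e>0 \<Longrightarrow>
      \<exists>r>0. \<exists>W. openin X W \<and> x\<in>W \<and> (\<forall>a'. \<forall>y\<in>W. dist a' a < r \<longrightarrow> f (a',y) < f (a,x) + e)"
    and L: "\<And>a x e. a\<in>B \<Longrightarrow> x\<in>topspace X \<Longrightarrow> e>0 \<Longrightarrow>
      \<exists>r>0. \<exists>W. openin X W \<and> x\<in>W \<and> (\<forall>a'. \<forall>y\<in>W. dist a' a < r \<longrightarrow> f (a,x) - e < f (a',y))"
  shows "continuous_map (prod_topology (top_of_set B) X) euclideanreal f"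
proof (rule cont_crit)
  fix a x and e :: real assume a: "a \<in> B" and x: "x \<in> topspace X" and e: "e > 0"
  obtain r1 W1 where 1: "r1 > 0" "openin X W1" "x \<in> W1" "\<forall>a'. \<forall>y\<in>W1. dist a' a < r1 \<longrightarrow> f (a',y) < f (a,x) + e"
    using U[OF a x e] by blast
  obtain r2 W2 where 2: "r2 > 0" "openin X W2" "x \<in> W2" "\<forall>a'. \<forall>y\<in>W2. dist a' a < r2 \<longrightarrow> f (a,x) - e < f (a',y)"
    using L[OF a x e] by blast
  show "\<exists>r>0. \<exists>W. openin X W \<and> x \<in> W \<and> (\<forall>a'\<in>B. \<forall>y\<in>W. dist a' a < r \<longrightarrow> \<bar>f (a',y) - f (a,x)\<bar> < e)"
  proof (intro exI[of _ "min r1 r2"] conjI exI[of _ "W1 \<inter> W2"] ballI impI)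
    fix a' y assume "a' \<in> B" "y \<in> W1 \<inter> W2" "dist a' a < min r1 r2"
    then have "f (a',y) < f (a,x) + e" "f (a,x) - e < f (a',y)" using 1(4) 2(4) by auto
    then show "\<bar>f (a',y) - f (a,x)\<bar> < e" by (simp add: abs_less_iff)
  qed (use 1 2 in auto)
qed

lemma cont_at_fixed:
  assumes c: "continuous_map (prod_topology (top_of_set B) X) euclideanreal f"
    and a: "a \<in> B" and x: "x \<in> topspace X" and e: "e > 0"
  shows "\<exists>W. openin X W \<and> x \<in> W \<and> (\<forall>y\<in>W. \<bar>f (a,y) - f (a,x)\<bar> < e)"
proof -
  define P where "P = {p \<in> topspace (prod_topology (top_of_set B) X). f p \<in> ball (f (a,x)) e}"
  have op: "openin (prod_topology (top_of_set B) X) P"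
    unfolding P_def using openin_continuous_map_preimage[OF c, of "ball (f (a,x)) e"] by simp
  have ax: "(a,x) \<in> P" unfolding P_def using a x e by simp
  have "\<exists>U V. openin (top_of_set B) U \<and> openin X V \<and> a \<in> U \<and> x \<in> V \<and> U \<times> V \<subseteq> P"
    using op ax unfolding openin_prod_topology_alt by blast
  then obtain U V where UV: "openin (top_of_set B) U" "openin X V" "a \<in> U" "x \<in> V" "U \<times> V \<subseteq> P"
    by blast
  have "\<bar>f (a,y) - f (a,x)\<bar> < e" if y: "y \<in> V" for y
  proof -
    have "(a,y) \<in> P" using UV(3,5) y by blast
    then have "dist (f (a,x)) (f (a,y)) < e" unfolding P_def by simp
    then show ?thesis by (simp add: dist_real_def abs_minus_commute)
  qed
  then show ?thesis using UV by blast
qed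

lemma Q_nonneg:
  fixes a b :: "'a::real_normed_vector"
  shows "0 \<le> 2 * (norm a)\<^sup>2 + 2 * (norm b)\<^sup>2 - (norm (a + b))\<^sup>2"
proof -
  have "(norm (a + b))\<^sup>2 \<le> (norm a + norm b)\<^sup>2"
    by (rule power_mono[OF norm_triangle_ineq norm_ge_zero])
  moreover have "(norm a + norm b)\<^sup>2 \<le> 2 * (norm a)\<^sup>2 + 2 * (norm b)\<^sup>2"
    using sum_squares_ge_zero[of "norm a - norm b" 0] by (simp add: power2_eq_square algebra_simps)
  ultimately show ?thesis by linarith
qed

lemma luc_eps:
  fixes a :: "'a::real_normed_vector"
  assumes luc: "locally_uniformly_convex TYPE('a)" and e: "e > 0"
  shows "\<exists>\<delta>>0. \<forall>b::'a. 2 * (norm a)\<^sup>2 + 2 * (norm b)\<^sup>2 - (norm (a + b))\<^sup>2 < \<delta> \<longrightarrow> norm (a - b) < e"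
proof (rule ccontr)
  define Q where "Q b = 2 * (norm a)\<^sup>2 + 2 * (norm b)\<^sup>2 - (norm (a + b))\<^sup>2" for b :: 'a
  assume neg: "\<not> ?thesis"
  have ex: "\<exists>b. Q b < \<delta> \<and> e \<le> norm (a - b)" if dp: "\<delta> > 0" for \<delta>
  proof (rule ccontr)
    assume "\<not> (\<exists>b. Q b < \<delta> \<and> e \<le> norm (a - b))"
    then have "\<forall>b. Q b < \<delta> \<longrightarrow> norm (a - b) < e" by (auto simp: not_le)
    then show False using neg dp unfolding Q_def by blast
  qed
  then have "\<forall>n::nat. \<exists>b. Q b < inverse (real (Suc n)) \<and> e \<le> norm (a - b)" by simp
  then obtain s where s: "\<And>n. Q (s n) < inverse (real (Suc n))" "\<And>n. e \<le> norm (a - s n)" by metis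
  have "(\<lambda>n. Q (s n)) \<longlonglongrightarrow> 0"
  proof (rule real_tendsto_sandwich[where f="\<lambda>n. 0" and h="\<lambda>n. inverse (real (Suc n))"])
    show "\<forall>\<^sub>F n in sequentially. 0 \<le> Q (s n)" unfolding Q_def using Q_nonneg[of a] by (intro always_eventually) blast
    show "\<forall>\<^sub>F n in sequentially. Q (s n) \<le> inverse (real (Suc n))" using s(1) less_imp_le by (intro always_eventually) blast
  qed (simp_all only: LIMSEQ_inverse_real_of_nat tendsto_const)
  then have "(\<lambda>n. norm (a - s n)) \<longlonglongrightarrow> 0" using luc unfolding locally_uniformly_convex_def Q_def by blast
  then have "\<forall>\<^sub>F n in sequentially. norm (a - s n) < e" using e by (rule order_tendstoD(2))
  then obtain n where "norm (a - s n) < e" using eventually_sequentially by auto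
  then show False using s(2)[of n] by simp
qed

lemma rotate_unit:
  fixes z :: complex
  assumes "z \<noteq> 0"
  shows "cmod (cnj z / complex_of_real (cmod z)) = 1" "cnj z / complex_of_real (cmod z) * z = complex_of_real (cmod z)"
proof -
  show "cmod (cnj z / complex_of_real (cmod z)) = 1" using assms by (simp add: norm_divide)
  have n2: "cnj z * z = (complex_of_real (cmod z))\<^sup>2"
    by (metis complex_norm_square mult.commute of_real_power)
  have "cnj z / complex_of_real (cmod z) * z = cnj z * z / complex_of_real (cmod z)" by simp
  also have "\<dots> = complex_of_real (cmod z)" using assms unfolding n2 by (simp add: power2_eq_square)
  finally show "cnj z / complex_of_real (cmod z) * z = complex_of_real (cmod z)" .
qed

lemma part2_lv:
  fixes \<kappa> :: "'x \<Rightarrow> 'a::cnormed_vector set"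
  assumes luc: "locally_uniformly_convex TYPE('a)"
    and contE: "continuous_map (prod_topology (top_of_set cdual) X) euclideanreal (\<lambda>(a, x). infdist a ((annih \<circ> \<kappa>) x))"
    and sub: "\<forall>y\<in>topspace X. csubspace_in scaleC UNIV (\<kappa> y)"
  shows "continuous_map X (lower_vietoris scaleC UNIV) \<kappa>"
proof (rule lv_intro[OF sub])
  fix x v0 and \<rho> :: real assume x: "x \<in> topspace X" and v0: "v0 \<in> \<kappa> x" and \<rho>: "\<rho> > 0"
  show "\<exists>W. openin X W \<and> x \<in> W \<and> (\<forall>y\<in>W. \<exists>q\<in>\<kappa> y. dist q v0 < \<rho>)"
  proof (cases "v0 = 0")
    case True
    have "\<forall>y\<in>topspace X. \<exists>q\<in>\<kappa> y. dist q v0 < \<rho>"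
      using sub True \<rho> unfolding csubspace_in_def by force
    then show ?thesis using x by blast
  next
    case False
    define n where "n = norm v0"
    have n: "n > 0" using False n_def by simp
    obtain \<delta> where \<delta>: "\<delta> > 0" "\<And>b::'a. 2 * (norm v0)\<^sup>2 + 2 * (norm b)\<^sup>2 - (norm (v0 + b))\<^sup>2 < \<delta> \<Longrightarrow> norm (v0 - b) < \<rho>"
      using luc_eps[OF luc \<rho>, of v0] by blast
    define \<eta> where "\<eta> = min (1/2) (\<delta> / (4 * n\<^sup>2 + 1))"
    have den: "4 * n\<^sup>2 + 1 > 0" by (simp add: add_nonneg_pos)
    have d1: "\<delta> / (4 * n\<^sup>2 + 1) > 0" using \<delta>(1) den by simp
    have \<eta>1: "\<eta> > 0" "\<eta> \<le> 1/2" "\<eta> \<le> \<delta> / (4 * n\<^sup>2 + 1)" using d1 unfolding \<eta>_def by (simp_all add: min_def)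
    have "\<eta> * (4 * n\<^sup>2 + 1) \<le> \<delta> / (4 * n\<^sup>2 + 1) * (4 * n\<^sup>2 + 1)"
      using \<eta>1(3) den by (intro mult_right_mono) auto
    then have "\<eta> * (4 * n\<^sup>2 + 1) \<le> \<delta>" using den by simp
    note \<eta> = \<eta>1(1,2) this
    have \<eta>4: "4 * n\<^sup>2 * \<eta> < \<delta>" using \<eta> by (simp add: algebra_simps)
    obtain \<phi> where \<phi>: "\<phi> \<in> cdual" "norm \<phi> \<le> 1" "blinfun_apply \<phi> v0 = complex_of_real n"
      using HB_norming_A[of v0] n_def by blast
    define E where "E y = infdist \<phi> (annih (\<kappa> y))" for y
    have Ex: "1 \<le> E x"
    proof -
      have "cmod (blinfun_apply \<phi> v0) \<le> E x * norm v0" using lowbound2[OF v0] E_def by simp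
      then have "n \<le> E x * n" using \<phi>(3) n n_def by simp
      then show ?thesis using n by simp
    qed
    obtain W where W: "openin X W" "x \<in> W" "\<forall>y\<in>W. \<bar>E y - E x\<bar> < \<eta>"
      using cont_at_fixed[OF contE \<phi>(1) x \<eta>(1)] unfolding E_def by auto
    have "\<forall>y\<in>W. \<exists>q\<in>\<kappa> y. dist q v0 < \<rho>"
    proof
      fix y assume y: "y \<in> W"
      have yt: "y \<in> topspace X" using W(1) y openin_subset by blast
      have Vy: "csubspace_in scaleC UNIV (\<kappa> y)" using sub yt by blast
      have t: "0 \<le> 1 - \<eta>" "1 - \<eta> < E y" using \<eta> W(3) y Ex by auto
      obtain v where v: "v \<in> \<kappa> y" "norm v = 1" "1 - \<eta> < cmod (blinfun_apply \<phi> v)"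
        using exists_big[OF Vy \<phi>(1) t(1)] t(2) unfolding E_def by blast
      define c where "c = cmod (blinfun_apply \<phi> v)"
      have c: "c > 1 - \<eta>" "c > 0" using v(3) \<eta> c_def by auto
      have nz: "blinfun_apply \<phi> v \<noteq> 0" using c c_def by auto
      define u where "u = cnj (blinfun_apply \<phi> v) / complex_of_real c"
      have u: "cmod u = 1" "u * blinfun_apply \<phi> v = complex_of_real c"
        using rotate_unit[OF nz] unfolding u_def c_def by auto
      define w where "w = n *\<^sub>R scaleC u v"
      have wV: "w \<in> \<kappa> y"
        unfolding w_def using csubspace_UNIV_D[OF Vy] v(1) by (simp add: subspace_scale)
      have nw: "norm w = n" unfolding w_def using n u(1) v(2) by (simp add: norm_scaleC)
      have pw: "blinfun_apply \<phi> w = complex_of_real (n * c)"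
        unfolding w_def using \<phi>(1) u(2) unfolding cdual_def by (simp add: blinfun.scaleR_right scaleR_conv_of_real)
      have "Re (blinfun_apply \<phi> (v0 + w)) \<le> norm (v0 + w)"
      proof -
        have "Re (blinfun_apply \<phi> (v0 + w)) \<le> cmod (blinfun_apply \<phi> (v0 + w))" by (rule complex_Re_le_cmod)
        also have "\<dots> \<le> norm \<phi> * norm (v0 + w)" by (rule norm_blinfun)
        also have "\<dots> \<le> norm (v0 + w)" using \<phi>(2) by (simp add: mult_left_le_one_le)
        finally show ?thesis .
      qed
      then have big: "n * (2 - \<eta>) \<le> norm (v0 + w)"
      proof -
        assume h: "Re (blinfun_apply \<phi> (v0 + w)) \<le> norm (v0 + w)"
        have "Re (blinfun_apply \<phi> (v0 + w)) = n + n * c" using \<phi>(3) pw by (simp add: blinfun.add_right)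
        moreover have "n * (2 - \<eta>) \<le> n + n * c"
        proof -
          have "1 * n \<le> (\<eta> + c) * n" using c n by (intro mult_right_mono) auto
          then show ?thesis by (simp add: algebra_simps)
        qed
        ultimately show ?thesis using h by linarith
      qed
      have "(n * (2 - \<eta>))\<^sup>2 \<le> (norm (v0 + w))\<^sup>2"
        using big n \<eta> by (intro power_mono) auto
      then have "2 * (norm v0)\<^sup>2 + 2 * (norm w)\<^sup>2 - (norm (v0 + w))\<^sup>2 \<le> 4 * n\<^sup>2 - (n * (2 - \<eta>))\<^sup>2"
        using nw n_def by simp
      also have "\<dots> = n\<^sup>2 * (4 * \<eta> - \<eta>\<^sup>2)" by (simp add: power2_eq_square algebra_simps)
      also have "\<dots> \<le> 4 * n\<^sup>2 * \<eta>" using \<eta> by (simp add: algebra_simps)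
      finally have "2 * (norm v0)\<^sup>2 + 2 * (norm w)\<^sup>2 - (norm (v0 + w))\<^sup>2 < \<delta>" using \<eta>4 by linarith
      then have "norm (v0 - w) < \<rho>" by (rule \<delta>(2))
      then show "\<exists>q\<in>\<kappa> y. dist q v0 < \<rho>" using wV by (intro bexI[of _ w]) (auto simp: dist_norm norm_minus_commute)
    qed
    then show ?thesis using W by blast
  qed
qed

lemma cdual_diff_scaleC:
  assumes "f \<in> cdual" "g \<in> cdual"
  shows "blinfun_apply (f - g) (scaleC c x) = c * blinfun_apply (f - g) x"
  using assms unfolding cdual_def by (simp add: blinfun.diff_left algebra_simps)

lemma smul:
  fixes a :: "'a::cnormed_vector"
  assumes fs: "frechet_smooth TYPE('a)" and na: "norm a = 1" and f0: "f0 \<in> cdual" "norm f0 \<le> 1"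
    "blinfun_apply f0 a = 1" and e: "e > 0"
  shows "\<exists>\<theta>>0. \<forall>f\<in>cdual. norm f \<le> 1 \<longrightarrow> 1 - \<theta> < Re (blinfun_apply f a) \<longrightarrow> norm (f - f0) \<le> 3 * e"
proof -
  obtain L :: "'a \<Rightarrow> real" where L: "\<forall>\<epsilon>>0. \<exists>\<eta>>0. \<forall>\<delta>::real. \<forall>b::'a. \<delta> \<noteq> 0 \<and> \<bar>\<delta>\<bar> < \<eta> \<and> norm b = 1 \<longrightarrow>
       \<bar>(norm (a - \<delta> *\<^sub>R b) - norm a) / \<delta> - L b\<bar> < \<epsilon>"
    using fs na unfolding frechet_smooth_def by blast
  obtain \<eta> where \<eta>: "\<eta> > 0" "\<And>\<delta> b. \<delta> \<noteq> 0 \<Longrightarrow> \<bar>\<delta>\<bar> < \<eta> \<Longrightarrow> norm b = 1 \<Longrightarrow>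
       \<bar>(norm (a - \<delta> *\<^sub>R b) - norm a) / \<delta> - L b\<bar> < e"
    using L e by blast
  define \<delta> where "\<delta> = \<eta> / 2"
  have \<delta>: "\<delta> > 0" "\<delta> \<noteq> 0" "\<bar>\<delta>\<bar> < \<eta>" "-\<delta> \<noteq> 0" "\<bar>-\<delta>\<bar> < \<eta>" using \<eta>(1) unfolding \<delta>_def by auto
  have sym: "norm (a - \<delta> *\<^sub>R b) + norm (a + \<delta> *\<^sub>R b) < 2 + 2 * \<delta> * e" if b: "norm b = 1" for b
  proof -
    have h1: "\<bar>(norm (a - \<delta> *\<^sub>R b) - 1) / \<delta> - L b\<bar> < e" using \<eta>(2)[OF \<delta>(2,3) b] na by simp
    have h2: "\<bar>(norm (a + \<delta> *\<^sub>R b) - 1) / (-\<delta>) - L b\<bar> < e" using \<eta>(2)[OF \<delta>(4,5) b] na by simp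
    have "(norm (a - \<delta> *\<^sub>R b) - 1) / \<delta> < L b + e" using h1 by (simp add: abs_less_iff)
    then have i1: "norm (a - \<delta> *\<^sub>R b) - 1 < \<delta> * (L b + e)" using \<delta>(1) by (simp add: divide_less_eq mult.commute)
    have "L b - e < (1 - norm (a + \<delta> *\<^sub>R b)) / \<delta>" using h2 by (simp add: abs_less_iff divide_minus_right minus_divide_left)
    then have i2: "\<delta> * (L b - e) < 1 - norm (a + \<delta> *\<^sub>R b)" using \<delta>(1) by (simp add: less_divide_eq mult.commute)
    show ?thesis using i1 i2 by (simp add: algebra_simps)
  qed
  have main: "norm (f - f0) \<le> 3 * e" if f: "f \<in> cdual" "norm f \<le> 1" "1 - \<delta> * e < Re (blinfun_apply f a)" for f
  proof (rule norm_blinfun_bound)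
    show "0 \<le> 3 * e" using e by simp
  next
    have unit: "Re (blinfun_apply (f - f0) b) < 3 * e" if b: "norm b = 1" for b
    proof -
      have r1: "Re (blinfun_apply f (a + \<delta> *\<^sub>R b)) \<le> norm (a + \<delta> *\<^sub>R b)"
        using complex_Re_le_cmod[of "blinfun_apply f (a + \<delta> *\<^sub>R b)"] norm_blinfun[of f "a + \<delta> *\<^sub>R b"]
          mult_right_mono[OF f(2) norm_ge_zero[of "a + \<delta> *\<^sub>R b"]] by linarith
      have r2: "Re (blinfun_apply f0 (a - \<delta> *\<^sub>R b)) \<le> norm (a - \<delta> *\<^sub>R b)"
        using complex_Re_le_cmod[of "blinfun_apply f0 (a - \<delta> *\<^sub>R b)"] norm_blinfun[of f0 "a - \<delta> *\<^sub>R b"]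
          mult_right_mono[OF f0(2) norm_ge_zero[of "a - \<delta> *\<^sub>R b"]] by linarith
      have e1: "Re (blinfun_apply f (a + \<delta> *\<^sub>R b)) = Re (blinfun_apply f a) + \<delta> * Re (blinfun_apply f b)"
        by (simp add: blinfun.add_right blinfun.scaleR_right)
      have e2: "Re (blinfun_apply f0 (a - \<delta> *\<^sub>R b)) = 1 - \<delta> * Re (blinfun_apply f0 b)"
        using f0(3) by (simp add: blinfun.diff_right blinfun.scaleR_right)
      have "\<delta> * (Re (blinfun_apply f b) - Re (blinfun_apply f0 b)) < \<delta> * (3 * e)"
        using sym[OF b] r1 r2 e1 e2 f(3) by (simp add: algebra_simps)
      then have "Re (blinfun_apply f b) - Re (blinfun_apply f0 b) < 3 * e" using \<delta>(1) by simp
      then show ?thesis by (simp add: blinfun.diff_left)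
    qed
    fix b :: 'a
    show "cmod (blinfun_apply (f - f0) b) \<le> 3 * e * norm b"
    proof (cases "blinfun_apply (f - f0) b = 0")
      case True then show ?thesis using e by simp
    next
      case False
      define z where "z = blinfun_apply (f - f0) b"
      have bnz: "b \<noteq> 0" using False by auto
      define u where "u = cnj z / complex_of_real (cmod z)"
      have u: "cmod u = 1" "u * z = complex_of_real (cmod z)" using rotate_unit[of z] False z_def u_def by auto
      define b' where "b' = scaleC u ((1 / norm b) *\<^sub>R b)"
      have nb': "norm b' = 1" unfolding b'_def using u(1) bnz by (simp add: norm_scaleC)
      have "blinfun_apply (f - f0) b' = u * (complex_of_real (1 / norm b) * z)"
        unfolding b'_def z_def using cdual_diff_scaleC[OF f(1) f0(1)]
        by (simp add: blinfun.scaleR_right scaleR_conv_of_real)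
      also have "\<dots> = complex_of_real (cmod z / norm b)" using u(2) by (simp add: algebra_simps)
      finally have "cmod z / norm b < 3 * e" using unit[OF nb'] by simp
      then show ?thesis using bnz unfolding z_def by (simp add: divide_less_eq)
    qed
  qed
  show ?thesis using main \<delta>(1) e by (intro exI[of _ "\<delta> * e"]) auto
qed

lemma part3_lv:
  fixes \<kappa> :: "'x \<Rightarrow> 'a::cnormed_vector set"
  assumes refl: "reflexive_space TYPE('a)" and fs: "frechet_smooth TYPE('a)"
    and contd: "continuous_map (prod_topology (top_of_set UNIV) X) euclideanreal (\<lambda>(a, x). infdist a (\<kappa> x))"
    and sub: "\<forall>y\<in>topspace X. csubspace_in scaleC UNIV (\<kappa> y)"
  shows "continuous_map X (lower_vietoris cscale cdual) (annih \<circ> \<kappa>)"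
proof (rule lv_intro)
  show "\<forall>y\<in>topspace X. csubspace_in cscale cdual ((annih \<circ> \<kappa>) y)" by (auto intro: csubspace_annih)
next
  fix x \<psi>0 and \<rho> :: real assume x: "x \<in> topspace X" and p0: "\<psi>0 \<in> (annih \<circ> \<kappa>) x" and \<rho>: "\<rho> > 0"
  show "\<exists>W. openin X W \<and> x \<in> W \<and> (\<forall>y\<in>W. \<exists>q\<in>(annih \<circ> \<kappa>) y. dist q \<psi>0 < \<rho>)"
  proof (cases "\<psi>0 = 0")
    case True
    have "\<forall>y\<in>topspace X. \<exists>q\<in>(annih \<circ> \<kappa>) y. dist q \<psi>0 < \<rho>"
      using annih_zero True \<rho> by force
    then show ?thesis using x by blast
  next
    case False
    define n where "n = norm \<psi>0"
    have n: "n > 0" using False n_def by simp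
    define f0 where "f0 = (1 / n) *\<^sub>R \<psi>0"
    have f0A: "f0 \<in> annih (\<kappa> x)" using p0 annih_scaleR unfolding f0_def by simp
    then have f0D: "f0 \<in> cdual" using annih_sub by blast
    have nf0: "norm f0 = 1" unfolding f0_def n_def using n n_def by simp
    have psi0: "\<psi>0 = n *\<^sub>R f0" unfolding f0_def using n by simp
    obtain \<Phi> where \<Phi>: "\<forall>f\<in>cdual. \<forall>g\<in>cdual. \<Phi> (f + g) = \<Phi> f + \<Phi> g" "\<forall>c. \<forall>f\<in>cdual. \<Phi> (cscale c f) = c * \<Phi> f"
      "\<forall>f\<in>cdual. cmod (\<Phi> f) \<le> norm f" "\<Phi> f0 = complex_of_real (norm f0)"
      using HB_norming_D[OF f0D] by blast
    have "\<exists>K. \<forall>f\<in>cdual. norm (\<Phi> f) \<le> K * norm f" using \<Phi>(3) by (intro exI[of _ 1]) simp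
    then obtain a :: 'a where a: "\<forall>f\<in>cdual. \<Phi> f = blinfun_apply f a"
      using refl \<Phi>(1,2) unfolding reflexive_space_def by blast
    have f0a: "blinfun_apply f0 a = 1" using a \<Phi>(4) nf0 f0D by simp
    have na: "norm a = 1"
    proof -
      obtain g where g: "g \<in> cdual" "norm g \<le> 1" "blinfun_apply g a = complex_of_real (norm a)"
        using HB_norming_A[of a] by blast
      have "norm a = cmod (\<Phi> g)" using a g by simp
      also have "\<dots> \<le> 1" using \<Phi>(3) g by force
      finally have le: "norm a \<le> 1" .
      have "1 = cmod (blinfun_apply f0 a)" using f0a by simp
      also have "\<dots> \<le> norm f0 * norm a" by (rule norm_blinfun)
      finally have "1 \<le> norm a" using nf0 by simp
      then show ?thesis using le by simp
    qed
    define \<epsilon> where "\<epsilon> = \<rho> / (4 * n)"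
    have \<epsilon>: "\<epsilon> > 0" "3 * \<epsilon> * n < \<rho>" using \<rho> n unfolding \<epsilon>_def by (auto simp: field_simps)
    obtain \<theta> where \<theta>: "\<theta> > 0" "\<And>f. f \<in> cdual \<Longrightarrow> norm f \<le> 1 \<Longrightarrow> 1 - \<theta> < Re (blinfun_apply f a) \<Longrightarrow> norm (f - f0) \<le> 3 * \<epsilon>"
      using smul[OF fs na f0D _ f0a \<epsilon>(1)] nf0 by auto
    have nex: "\<kappa> x \<noteq> {}" using sub x unfolding csubspace_in_def by blast
    have dx: "1 \<le> infdist a (\<kappa> x)"
      using lowbound1[OF f0A nex, of a] f0a nf0 by simp
    obtain W where W: "openin X W" "x \<in> W" "\<forall>y\<in>W. \<bar>infdist a (\<kappa> y) - infdist a (\<kappa> x)\<bar> < \<theta>"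
      using cont_at_fixed[OF contd UNIV_I x \<theta>(1), of a] by auto
    have "\<forall>y\<in>W. \<exists>q\<in>(annih \<circ> \<kappa>) y. dist q \<psi>0 < \<rho>"
    proof
      fix y assume y: "y \<in> W"
      have yt: "y \<in> topspace X" using W(1) y openin_subset by blast
      obtain g where g: "g \<in> annih (\<kappa> y)" "norm g \<le> 1" "blinfun_apply g a = complex_of_real (infdist a (\<kappa> y))"
        using HB_dist_A[of "\<kappa> y" a] sub yt by blast
      have gD: "g \<in> cdual" using g(1) annih_sub by blast
      have "1 - \<theta> < Re (blinfun_apply g a)" using g(3) W(3) y dx by auto
      then have ng: "norm (g - f0) \<le> 3 * \<epsilon>" using \<theta>(2)[OF gD g(2)] by blast
      have qA: "n *\<^sub>R g \<in> (annih \<circ> \<kappa>) y" using annih_scaleR[OF g(1)] by simp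
      have "dist (n *\<^sub>R g) \<psi>0 = n * norm (g - f0)"
        unfolding psi0 dist_norm using n by (simp flip: scaleR_diff_right)
      also have "\<dots> \<le> n * (3 * \<epsilon>)" using ng n by (simp add: mult_left_mono)
      also have "\<dots> < \<rho>" using \<epsilon>(2) by (simp add: algebra_simps)
      finally show "\<exists>q\<in>(annih \<circ> \<kappa>) y. dist q \<psi>0 < \<rho>" using qA by blast
    qed
    then show ?thesis using W by blast
  qed
qed

lemma cont_dist_generic:
  fixes K :: "'x \<Rightarrow> 'b::real_normed_vector set"
  assumes U: "\<And>a x e. a\<in>B \<Longrightarrow> x\<in>topspace X \<Longrightarrow> e>0 \<Longrightarrow> \<exists>r>0. \<exists>W. openin X W \<and> x\<in>W \<and>
        (\<forall>a'. \<forall>y\<in>W. dist a' a < r \<longrightarrow> infdist a' (K y) < infdist a (K x) + e)"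
    and L: "\<And>a x e. a\<in>B \<Longrightarrow> x\<in>topspace X \<Longrightarrow> e>0 \<Longrightarrow> \<exists>r>0. \<exists>W. openin X W \<and> x\<in>W \<and>
        (\<forall>a'. \<forall>y\<in>W. dist a' a < r \<longrightarrow> infdist a (K x) - e < infdist a' (K y))"
  shows "continuous_map (prod_topology (top_of_set B) X) euclideanreal (\<lambda>(a, x). infdist a (K x))"
  by (rule cont_from_semi) (use U L in simp_all)

lemma contd_from:
  fixes \<kappa> :: "'x \<Rightarrow> 'a::cnormed_vector set"
  assumes cA: "continuous_map X (lower_vietoris scaleC UNIV) \<kappa>"
    and cD: "continuous_map X (lower_vietoris cscale cdual) (annih \<circ> \<kappa>)"
    and sub: "\<forall>y\<in>topspace X. csubspace_in scaleC UNIV (\<kappa> y)"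
  shows "continuous_map (prod_topology (top_of_set UNIV) X) euclideanreal (\<lambda>(a, x). infdist a (\<kappa> x))"
proof (rule cont_dist_generic)
  fix a :: 'a and x and e :: real assume "x \<in> topspace X" "e > 0"
  then show "\<exists>r>0. \<exists>W. openin X W \<and> x\<in>W \<and> (\<forall>a'. \<forall>y\<in>W. dist a' a < r \<longrightarrow> infdist a' (\<kappa> y) < infdist a (\<kappa> x) + e)"
    using dist_usc[OF cA _ sub] by blast
next
  fix a :: 'a and x and e :: real assume "x \<in> topspace X" "e > 0"
  then show "\<exists>r>0. \<exists>W. openin X W \<and> x\<in>W \<and> (\<forall>a'. \<forall>y\<in>W. dist a' a < r \<longrightarrow> infdist a (\<kappa> x) - e < infdist a' (\<kappa> y))"
    using dA_lsc[OF cD _ sub] by blast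
qed

lemma conte_from:
  fixes \<kappa> :: "'x \<Rightarrow> 'a::cnormed_vector set"
  assumes cA: "continuous_map X (lower_vietoris scaleC UNIV) \<kappa>"
    and cD: "continuous_map X (lower_vietoris cscale cdual) (annih \<circ> \<kappa>)"
    and sub: "\<forall>y\<in>topspace X. csubspace_in scaleC UNIV (\<kappa> y)"
  shows "continuous_map (prod_topology (top_of_set cdual) X) euclideanreal (\<lambda>(a, x). infdist a ((annih \<circ> \<kappa>) x))"
proof (rule cont_dist_generic)
  have subD: "\<forall>y\<in>topspace X. csubspace_in cscale cdual ((annih \<circ> \<kappa>) y)" by (auto intro: csubspace_annih)
  fix a :: "'a \<Rightarrow>\<^sub>L complex" and x and e :: real assume "x \<in> topspace X" "e > 0"
  then show "\<exists>r>0. \<exists>W. openin X W \<and> x\<in>W \<and> (\<forall>a'. \<forall>y\<in>W. dist a' a < r \<longrightarrow> infdist a' ((annih \<circ> \<kappa>) y) < infdist a ((annih \<circ> \<kappa>) x) + e)"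
    using dist_usc[OF cD _ subD] by blast
next
  fix a :: "'a \<Rightarrow>\<^sub>L complex" and x and e :: real assume "a \<in> cdual" "x \<in> topspace X" "e > 0"
  then show "\<exists>r>0. \<exists>W. openin X W \<and> x\<in>W \<and> (\<forall>a'. \<forall>y\<in>W. dist a' a < r \<longrightarrow> infdist a ((annih \<circ> \<kappa>) x) - e < infdist a' ((annih \<circ> \<kappa>) y))"
    using dD_lsc[OF cA _ sub] by simp
qed

theorem theorem7p15:
  fixes X :: "'x topology" and \<kappa> :: "'x \<Rightarrow> 'a::cnormed_vector set"
  assumes "\<forall>x\<in>topspace X. closed (\<kappa> x) \<and> csubspace_in scaleC UNIV (\<kappa> x)"
  shows "(quotient_vector_bundle X scaleC UNIV \<kappa> \<and> quotient_vector_bundle X cscale cdual (annih \<circ> \<kappa>)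
            \<longrightarrow> cont_normed_qvb X scaleC UNIV \<kappa> \<and> cont_normed_qvb X cscale cdual (annih \<circ> \<kappa>))
       \<and> (locally_uniformly_convex TYPE('a) \<and> cont_normed_qvb X cscale cdual (annih \<circ> \<kappa>)
            \<longrightarrow> cont_normed_qvb X scaleC UNIV \<kappa>)
       \<and> (reflexive_space TYPE('a) \<and> frechet_smooth TYPE('a) \<and> cont_normed_qvb X scaleC UNIV \<kappa>
            \<longrightarrow> cont_normed_qvb X cscale cdual (annih \<circ> \<kappa>))"
proof -
  have sub: "\<forall>y\<in>topspace X. csubspace_in scaleC UNIV (\<kappa> y)" using assms by blast
  have subD: "\<forall>y\<in>topspace X. csubspace_in cscale cdual ((annih \<circ> \<kappa>) y)" by (auto intro: csubspace_annih)
  have qA: "quotient_vector_bundle X scaleC UNIV \<kappa> \<longleftrightarrow> continuous_map X (lower_vietoris scaleC UNIV) \<kappa>"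
    unfolding quotient_vector_bundle_def using sub by blast
  have qD: "quotient_vector_bundle X cscale cdual (annih \<circ> \<kappa>) \<longleftrightarrow> continuous_map X (lower_vietoris cscale cdual) (annih \<circ> \<kappa>)"
    unfolding quotient_vector_bundle_def using subD by blast
  show ?thesis
  proof (intro conjI impI)
    assume h: "quotient_vector_bundle X scaleC UNIV \<kappa> \<and> quotient_vector_bundle X cscale cdual (annih \<circ> \<kappa>)"
    then have cA: "continuous_map X (lower_vietoris scaleC UNIV) \<kappa>"
      and cD: "continuous_map X (lower_vietoris cscale cdual) (annih \<circ> \<kappa>)" using qA qD by auto
    show "cont_normed_qvb X scaleC UNIV \<kappa>"
      unfolding cont_normed_qvb_def using h contd_from[OF cA cD sub] by blast
    show "cont_normed_qvb X cscale cdual (annih \<circ> \<kappa>)"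
      unfolding cont_normed_qvb_def using h conte_from[OF cA cD sub] by blast
  next
    assume h: "locally_uniformly_convex TYPE('a) \<and> cont_normed_qvb X cscale cdual (annih \<circ> \<kappa>)"
    then have cD: "continuous_map X (lower_vietoris cscale cdual) (annih \<circ> \<kappa>)"
      and cE: "continuous_map (prod_topology (top_of_set cdual) X) euclideanreal (\<lambda>(a, x). infdist a ((annih \<circ> \<kappa>) x))"
      using qD unfolding cont_normed_qvb_def by auto
    have cA: "continuous_map X (lower_vietoris scaleC UNIV) \<kappa>"
      using part2_lv[OF _ cE sub] h by blast
    show "cont_normed_qvb X scaleC UNIV \<kappa>"
      unfolding cont_normed_qvb_def using qA cA contd_from[OF cA cD sub] by blast
  next
    assume h: "reflexive_space TYPE('a) \<and> frechet_smooth TYPE('a) \<and> cont_normed_qvb X scaleC UNIV \<kappa>"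
    then have cA: "continuous_map X (lower_vietoris scaleC UNIV) \<kappa>"
      and cd: "continuous_map (prod_topology (top_of_set UNIV) X) euclideanreal (\<lambda>(a, x). infdist a (\<kappa> x))"
      using qA unfolding cont_normed_qvb_def by auto
    have cD: "continuous_map X (lower_vietoris cscale cdual) (annih \<circ> \<kappa>)"
      using part3_lv[OF _ _ cd sub] h by blast
    show "cont_normed_qvb X cscale cdual (annih \<circ> \<kappa>)"
      unfolding cont_normed_qvb_def using qD cD conte_from[OF cA cD sub] by blast
  qed
qed

end
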